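(* Let $\mathcal E$ be a reflexive nonlinear Dirichlet form on $L^2(\mu)$ and for $r>0$ let $C_r\colon\mathbb R\to\mathbb R$, $C_r(x)=(x\wedge r)\vee(-r)$. For all $f\in M(\mathcal E)$ we have $\lim_{\varepsilon\to0+}C_\varepsilon(f)=0$ and $\lim_{R\to\infty}C_R(f)=f$ with respect to $\|\cdot\|_L$. In particular, $L^1(\mu)\cap L^\infty(\mu)\cap M(\mathcal E)$ is dense in $(M(\mathcal E),\|\cdot\|_L)$.
   Context: $(X,\mathfrak A,\mu)$ is a $\sigma$-finite measure space. A nonlinear Dirichlet form is a lower semicontinuous convex functional $\mathcal E\colon L^2(\mu)\to[0,\infty]$ with $\mathcal E(-f)=\mathcal E(f)$, $\mathcal E(0)=0$, such that for every 1-Lipschitz $C\colon\mathbb R\to\mathbb R$ with $C(0)=0$ (normal contraction) one has $\mathcal E(f+Cg)+\mathcal E(f-Cg)\le\mathcal E(f+g)+\mathcal E(f-g)$ for all $f,g$. $M(\mathcal E)=\{f\in L^2(\mu):\lim_{\lambda\to0+}\mathcal E(\lambda f)=0\}$, $\|f\|_L=\inf\{\lambda>0:\mathcal E(\lambda^{-1}f)\le1\}$. $\mathcal E$ is reflexive if the image of $M(\mathcal E)$ in the bidual of the seminormed space $(M(\mathcal E),\|\cdot\|_L)$ under the canonical map is norm dense. *)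

theory Defs
  imports "HOL-Analysis.Analysis"
begin

text \<open>L^2(mu) represented by square-integrable Borel functions (classes modulo a.e.
equality are handled by requiring the functional to respect a.e. equality).\<close>
definition L2 :: "'a measure \<Rightarrow> ('a \<Rightarrow> real) set" where
  "L2 M = {f. f \<in> borel_measurable M \<and> integrable M (\<lambda>x. (f x)\<^sup>2)}"

definition normal_contraction :: "(real \<Rightarrow> real) \<Rightarrow> bool" where
  "normal_contraction C \<longleftrightarrow> C 0 = 0 \<and> (\<forall>x y. \<bar>C x - C y\<bar> \<le> \<bar>x - y\<bar>)"

definition nonlinear_dirichlet_form :: "'a measure \<Rightarrow> (('a \<Rightarrow> real) \<Rightarrow> ennreal) \<Rightarrow> bool" where
  "nonlinear_dirichlet_form M E \<longleftrightarrow>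
     \<comment> \<open>well defined on L^2 classes\<close>
     (\<forall>f\<in>L2 M. \<forall>g\<in>L2 M. (AE x in M. f x = g x) \<longrightarrow> E f = E g) \<and>
     \<comment> \<open>lower semicontinuity w.r.t. the L^2 norm\<close>
     (\<forall>fs f. (\<forall>n. fs n \<in> L2 M) \<longrightarrow> f \<in> L2 M \<longrightarrow>
        ((\<lambda>n. integral\<^sup>L M (\<lambda>x. (fs n x - f x)\<^sup>2)) \<longlonglongrightarrow> 0) \<longrightarrow>
        E f \<le> liminf (\<lambda>n. E (fs n))) \<and>
     \<comment> \<open>convexity\<close>
     (\<forall>f\<in>L2 M. \<forall>g\<in>L2 M. \<forall>t::real. 0 \<le> t \<and> t \<le> 1 \<longrightarrow>
        E (\<lambda>x. t * f x + (1 - t) * g x) \<le> ennreal t * E f + ennreal (1 - t) * E g) \<and>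
     \<comment> \<open>symmetry and normalisation\<close>
     (\<forall>f\<in>L2 M. E (\<lambda>x. - f x) = E f) \<and>
     E (\<lambda>x. 0) = 0 \<and>
     \<comment> \<open>contraction property\<close>
     (\<forall>C. normal_contraction C \<longrightarrow> (\<forall>f\<in>L2 M. \<forall>g\<in>L2 M.
        E (\<lambda>x. f x + C (g x)) + E (\<lambda>x. f x - C (g x))
          \<le> E (\<lambda>x. f x + g x) + E (\<lambda>x. f x - g x)))"

definition MSet :: "'a measure \<Rightarrow> (('a \<Rightarrow> real) \<Rightarrow> ennreal) \<Rightarrow> ('a \<Rightarrow> real) set" where
  "MSet M E = {f \<in> L2 M. ((\<lambda>l::real. E (\<lambda>x. l * f x)) \<longlongrightarrow> 0) (at_right 0)}"

definition lux_norm :: "(('a \<Rightarrow> real) \<Rightarrow> ennreal) \<Rightarrow> ('a \<Rightarrow> real) \<Rightarrow> real" where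
  "lux_norm E f = Inf {l::real. l > 0 \<and> E (\<lambda>x. f x / l) \<le> 1}"

definition dual_space :: "('b \<Rightarrow> real) set \<Rightarrow> (('b \<Rightarrow> real) \<Rightarrow> real) \<Rightarrow> ((('b \<Rightarrow> real) \<Rightarrow> real) set)" where
  "dual_space V N = {\<phi>. (\<forall>f\<in>V. \<forall>g\<in>V. \<forall>a b. \<phi> (\<lambda>x. a * f x + b * g x) = a * \<phi> f + b * \<phi> g)
                        \<and> (\<exists>K. \<forall>f\<in>V. \<bar>\<phi> f\<bar> \<le> K * N f)}"

definition dual_norm :: "('b \<Rightarrow> real) set \<Rightarrow> (('b \<Rightarrow> real) \<Rightarrow> real) \<Rightarrow> (('b \<Rightarrow> real) \<Rightarrow> real) \<Rightarrow> real" where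
  "dual_norm V N \<phi> = Sup ((\<lambda>f. \<bar>\<phi> f\<bar>) ` {f \<in> V. N f \<le> 1})"

definition bidual_space :: "('b \<Rightarrow> real) set \<Rightarrow> (('b \<Rightarrow> real) \<Rightarrow> real)
     \<Rightarrow> (((('b \<Rightarrow> real) \<Rightarrow> real) \<Rightarrow> real) set)" where
  "bidual_space V N = {\<Psi>. (\<forall>\<phi>\<in>dual_space V N. \<forall>\<psi>\<in>dual_space V N. \<forall>a b.
                            \<Psi> (\<lambda>f. a * \<phi> f + b * \<psi> f) = a * \<Psi> \<phi> + b * \<Psi> \<psi>)
                         \<and> (\<exists>K. \<forall>\<phi>\<in>dual_space V N. \<bar>\<Psi> \<phi>\<bar> \<le> K * dual_norm V N \<phi>)}"

definition bidual_norm :: "('b \<Rightarrow> real) set \<Rightarrow> (('b \<Rightarrow> real) \<Rightarrow> real)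
     \<Rightarrow> ((('b \<Rightarrow> real) \<Rightarrow> real) \<Rightarrow> real) \<Rightarrow> real" where
  "bidual_norm V N \<Psi> = Sup ((\<lambda>\<phi>. \<bar>\<Psi> \<phi>\<bar>) ` {\<phi> \<in> dual_space V N. dual_norm V N \<phi> \<le> 1})"

definition canonical_emb :: "('b \<Rightarrow> real) \<Rightarrow> (('b \<Rightarrow> real) \<Rightarrow> real) \<Rightarrow> real" where
  "canonical_emb f = (\<lambda>\<phi>. \<phi> f)"

definition reflexive_form :: "'a measure \<Rightarrow> (('a \<Rightarrow> real) \<Rightarrow> ennreal) \<Rightarrow> bool" where
  "reflexive_form M E \<longleftrightarrow>
     (\<forall>\<Psi>\<in>bidual_space (MSet M E) (lux_norm E). \<forall>e>0. \<exists>f\<in>MSet M E.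
        bidual_norm (MSet M E) (lux_norm E) (\<lambda>\<phi>. \<Psi> \<phi> - canonical_emb f \<phi>) < e)"

definition clamp :: "real \<Rightarrow> real \<Rightarrow> real" where
  "clamp r x = max (min x r) (- r)"

end

theory Submission
  imports Defs
begin

definition lin_closed :: "('b \<Rightarrow> real) set \<Rightarrow> bool" where
  "lin_closed V \<longleftrightarrow> (\<forall>f\<in>V. \<forall>g\<in>V. \<forall>a b. (\<lambda>x. a * f x + b * g x) \<in> V)"

definition sublin :: "('b \<Rightarrow> real) set \<Rightarrow> (('b \<Rightarrow> real) \<Rightarrow> real) \<Rightarrow> bool" where
  "sublin V p \<longleftrightarrow> (\<forall>f\<in>V. \<forall>g\<in>V. p (\<lambda>x. f x + g x) \<le> p f + p g)
      \<and> (\<forall>f\<in>V. \<forall>c\<ge>0. p (\<lambda>x. c * f x) = c * p f)"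

lemma lc_lin: "lin_closed V \<Longrightarrow> f \<in> V \<Longrightarrow> g \<in> V \<Longrightarrow> (\<lambda>x. a * f x + b * g x) \<in> V"
  unfolding lin_closed_def by blast

lemma lc_add: assumes "lin_closed V" "f \<in> V" "g \<in> V" shows "(\<lambda>x. f x + g x) \<in> V"
  using lc_lin[OF assms, of 1 1] by simp

lemma lc_scale: assumes "lin_closed V" "f \<in> V" shows "(\<lambda>x. c * f x) \<in> V"
  using lc_lin[OF assms assms(2), of c 0] by simp

lemma lc_neg: assumes "lin_closed V" "f \<in> V" shows "(\<lambda>x. - f x) \<in> V"
  using lc_scale[OF assms, of "-1"] by simp

lemma sl_add: "sublin V p \<Longrightarrow> f \<in> V \<Longrightarrow> g \<in> V \<Longrightarrow> p (\<lambda>x. f x + g x) \<le> p f + p g"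
  unfolding sublin_def by blast

lemma sl_hom: "sublin V p \<Longrightarrow> f \<in> V \<Longrightarrow> c \<ge> 0 \<Longrightarrow> p (\<lambda>x. c * f x) = c * p f"
  unfolding sublin_def by blast

lemma sl_zero: assumes "sublin V p" "(\<lambda>x. 0) \<in> V" shows "p (\<lambda>x. 0) = 0"
  using sl_hom[OF assms(1,2), of 0] by simp

lemma sl_negsum: assumes "sublin V p" "lin_closed V" "f \<in> V" shows "0 \<le> p f + p (\<lambda>x. - f x)"
proof -
  have z: "(\<lambda>x. 0) \<in> V" using lc_scale[OF assms(2,3), of 0] by simp
  have "p (\<lambda>x. f x + - f x) \<le> p f + p (\<lambda>x. - f x)"
    using sl_add[OF assms(1,3) lc_neg[OF assms(2,3)]] .
  then show ?thesis using sl_zero[OF assms(1) z] by simp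
qed

lemma HB:
  fixes V :: "('b \<Rightarrow> real) set" and q
  assumes lc: "lin_closed V" and z: "(\<lambda>x. 0) \<in> V" and sq: "sublin V q"
  shows "\<exists>\<phi>. (\<forall>f\<in>V. \<forall>g\<in>V. \<forall>a b. \<phi> (\<lambda>x. a * f x + b * g x) = a * \<phi> f + b * \<phi> g)
            \<and> (\<forall>f\<in>V. \<phi> f \<le> q f)"
proof -
  define A where "A = {p. sublin V p \<and> (\<forall>x\<in>V. p x \<le> q x) \<and> (\<forall>x. x \<notin> V \<longrightarrow> p x = 0)}"
  define R where "R = (\<lambda>p1 p2. \<forall>x\<in>V. p2 x \<le> (p1 x::real))"
  define q0 where "q0 = (\<lambda>x. if x \<in> V then q x else 0)"
  have sl_cong: "sublin V p'" if "sublin V p" "\<And>x. x \<in> V \<Longrightarrow> p' x = p x" for p p'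
    using that lc_add[OF lc] lc_scale[OF lc] unfolding sublin_def by simp
  have q0A: "q0 \<in> A" unfolding A_def q0_def using sl_cong[OF sq] by auto
  have lowb: "- q (\<lambda>t. - x t) \<le> p x" if "p \<in> A" "x \<in> V" for p x
  proof -
    have "0 \<le> p x + p (\<lambda>t. - x t)" using sl_negsum[of V p x] that lc unfolding A_def by auto
    moreover have "p (\<lambda>t. - x t) \<le> q (\<lambda>t. - x t)" using that lc_neg[OF lc] unfolding A_def by auto
    ultimately show ?thesis by linarith
  qed
  have po: "partial_order_on A (relation_of R A)"
  proof (rule partial_order_on_relation_ofI)
    fix a b assume "a \<in> A" "b \<in> A" "R a b" "R b a"
    show "a = b"
    proof
      fix x show "a x = b x"
      proof (cases "x \<in> V")
        case True then show ?thesis using \<open>R a b\<close> \<open>R b a\<close> unfolding R_def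
          by (meson order_antisym)
      next
        case False then show ?thesis using \<open>a \<in> A\<close> \<open>b \<in> A\<close> unfolding A_def by simp
      qed
    qed
  qed (simp_all add: R_def, meson order_trans)
  have chains: "\<exists>u\<in>A. \<forall>a\<in>C. R a u" if C: "C \<in> Chains (relation_of R A)" for C
  proof -
    have CA: "C \<subseteq> A" using Chains_relation_of[OF C] .
    define C' where "C' = insert q0 C"
    have C'A: "C' \<subseteq> A" using CA q0A C'_def by auto
    have C'ne: "C' \<noteq> {}" using C'_def by auto
    have cmp: "R p1 p2 \<or> R p2 p1" if "p1 \<in> C'" "p2 \<in> C'" for p1 p2
    proof -
      have "R q0 p" if "p \<in> A" for p using that unfolding R_def A_def q0_def by auto
      moreover have "R p1 p2 \<or> R p2 p1" if "p1 \<in> C" "p2 \<in> C"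
        using C that unfolding Chains_def relation_of_def by auto
      ultimately show ?thesis using \<open>p1 \<in> C'\<close> \<open>p2 \<in> C'\<close> CA q0A unfolding C'_def by auto
    qed
    define u where "u = (\<lambda>x. if x \<in> V then Inf ((\<lambda>p. p x) ` C') else 0)"
    have bdd: "bdd_below ((\<lambda>p. p x) ` C')" if "x \<in> V" for x
      using lowb[OF _ that] C'A unfolding bdd_below_def by blast
    have ule: "u x \<le> p x" if "p \<in> C'" "x \<in> V" for p x
      unfolding u_def using that bdd[OF that(2)] by (auto intro: cInf_lower)
    have uge: "z \<le> u x" if "x \<in> V" "\<And>p. p \<in> C' \<Longrightarrow> z \<le> p x" for x z
      unfolding u_def using that C'ne by (auto intro!: cInf_greatest)
    have pA: "sublin V p" if "p \<in> C'" for p using that C'A unfolding A_def by auto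
    have usub: "sublin V u" unfolding sublin_def
    proof (intro conjI ballI allI impI)
      fix x y assume x: "x \<in> V" and y: "y \<in> V"
      have xy: "(\<lambda>t. x t + y t) \<in> V" using lc_add[OF lc x y] .
      have pre: "u (\<lambda>t. x t + y t) \<le> p1 x + p2 y" if "p1 \<in> C'" "p2 \<in> C'" for p1 p2
      proof -
        have *: "u (\<lambda>t. x t + y t) \<le> p x + p y" if "p \<in> C'" for p
          using ule[OF that xy] sl_add[OF pA[OF that] x y] by linarith
        from cmp[OF that] show ?thesis
        proof
          assume "R p1 p2" then have "p2 x \<le> p1 x" using x unfolding R_def by blast
          then show ?thesis using *[OF that(2)] by linarith
        next
          assume "R p2 p1" then have "p1 y \<le> p2 y" using y unfolding R_def by blast
          then show ?thesis using *[OF that(1)] by linarith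
        qed
      qed
      then have "u (\<lambda>t. x t + y t) - p2 y \<le> u x" if "p2 \<in> C'" for p2
        using that pre by (intro uge[OF x]) (simp add: algebra_simps)
      then have "u (\<lambda>t. x t + y t) - u x \<le> u y"
        by (intro uge[OF y]) (simp add: algebra_simps)
      then show "u (\<lambda>t. x t + y t) \<le> u x + u y" by linarith
    next
      fix x and c :: real assume x: "x \<in> V" and c: "0 \<le> c"
      have cx: "(\<lambda>t. c * x t) \<in> V" using lc_scale[OF lc x] .
      show "u (\<lambda>t. c * x t) = c * u x"
      proof (cases "c = 0")
        case True
        have "u (\<lambda>t. c * x t) = 0"
        proof (rule antisym)
          obtain p where "p \<in> C'" using C'ne by auto
          then show "u (\<lambda>t. c * x t) \<le> 0" using ule[OF _ cx, of p] sl_hom[OF pA x c, of p] True by simp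
          show "0 \<le> u (\<lambda>t. c * x t)"
          proof (rule uge[OF cx])
            fix p assume "p \<in> C'"
            then show "0 \<le> p (\<lambda>t. c * x t)" using sl_hom[OF pA[OF \<open>p \<in> C'\<close>] x c] True by simp
          qed
        qed
        then show ?thesis using True by simp
      next
        case False
        then have cp: "c > 0" using c by simp
        have "u (\<lambda>t. c * x t) / c \<le> u x"
        proof (rule uge[OF x])
          fix p assume "p \<in> C'"
          then have "u (\<lambda>t. c * x t) \<le> c * p x" using ule[OF _ cx, of p] sl_hom[OF pA x c, of p] by simp
          then show "u (\<lambda>t. c * x t) / c \<le> p x" using cp by (simp add: divide_simps mult.commute)
        qed
        moreover have "c * u x \<le> u (\<lambda>t. c * x t)"
        proof (rule uge[OF cx])
          fix p assume "p \<in> C'"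
          then show "c * u x \<le> p (\<lambda>t. c * x t)" using ule[OF _ x, of p] sl_hom[OF pA x c, of p] c
            by (simp add: mult_left_mono)
        qed
        ultimately show ?thesis using cp by (simp add: divide_simps mult.commute antisym)
      qed
    qed
    have uA: "u \<in> A" unfolding A_def
    proof (intro CollectI conjI usub ballI allI impI)
      fix x assume "x \<in> V" then show "u x \<le> q x" using ule[of q0 x] unfolding C'_def q0_def by simp
    next
      fix x assume "x \<notin> V" then show "u x = 0" unfolding u_def by simp
    qed
    show ?thesis using uA ule unfolding R_def C'_def by blast
  qed
  obtain m where mA: "m \<in> A" and mmin: "\<And>a. a \<in> A \<Longrightarrow> R m a \<Longrightarrow> a = m"
    using predicate_Zorn[OF po chains] by blast
  have msub: "sublin V m" and mq: "\<And>x. x \<in> V \<Longrightarrow> m x \<le> q x" using mA unfolding A_def by auto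
  have m0: "m (\<lambda>x. 0) = 0" using sl_zero[OF msub z] .
  have mneg: "m (\<lambda>t. - y t) = - m y" if y: "y \<in> V" for y
  proof -
    define S where "S = (\<lambda>x. {m (\<lambda>t. x t + s * y t) - s * m y | s. s \<ge> 0})"
    define p' where "p' = (\<lambda>x. if x \<in> V then Inf (S x) else 0)"
    have Sne: "S x \<noteq> {}" for x unfolding S_def by auto
    have Sbdd: "bdd_below (S x)" if x: "x \<in> V" for x
    proof -
      have "- m (\<lambda>t. - x t) \<le> m (\<lambda>t. x t + s * y t) - s * m y" if "s \<ge> 0" for s
      proof -
        have a: "(\<lambda>t. x t + s * y t) \<in> V" using lc_lin[OF lc x y, of 1 "s"] by simp
        have "m (\<lambda>t. (x t + s * y t) + - x t) \<le> m (\<lambda>t. x t + s * y t) + m (\<lambda>t. - x t)"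
          using sl_add[OF msub a lc_neg[OF lc x]] .
        moreover have "m (\<lambda>t. (x t + s * y t) + - x t) = s * m y"
          using sl_hom[OF msub y that] by simp
        ultimately show ?thesis by linarith
      qed
      then show ?thesis unfolding bdd_below_def S_def by blast
    qed
    have p'le: "p' x \<le> m (\<lambda>t. x t + s * y t) - s * m y" if "x \<in> V" "s \<ge> 0" for x s
      unfolding p'_def using that Sbdd[OF that(1)] by (auto intro!: cInf_lower simp: S_def)
    have p'ge: "z \<le> p' x" if "x \<in> V" "\<And>s. s \<ge> 0 \<Longrightarrow> z \<le> m (\<lambda>t. x t + s * y t) - s * m y" for x z
      unfolding p'_def using that Sne by (auto intro!: cInf_greatest simp: S_def)
    have p'm: "p' x \<le> m x" if "x \<in> V" for x using p'le[OF that, of 0] by simp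
    have p'sub: "sublin V p'" unfolding sublin_def
    proof (intro conjI ballI allI impI)
      fix x1 x2 assume x1: "x1 \<in> V" and x2: "x2 \<in> V"
      have x12: "(\<lambda>t. x1 t + x2 t) \<in> V" using lc_add[OF lc x1 x2] .
      have key: "p' (\<lambda>t. x1 t + x2 t) \<le> (m (\<lambda>t. x1 t + s1 * y t) - s1 * m y) + (m (\<lambda>t. x2 t + s2 * y t) - s2 * m y)"
        if s1: "s1 \<ge> 0" and s2: "s2 \<ge> 0" for s1 s2
      proof -
        have a1: "(\<lambda>t. x1 t + s1 * y t) \<in> V" using lc_lin[OF lc x1 y, of 1 "s1"] by simp
        have a2: "(\<lambda>t. x2 t + s2 * y t) \<in> V" using lc_lin[OF lc x2 y, of 1 "s2"] by simp
        have "p' (\<lambda>t. x1 t + x2 t) \<le> m (\<lambda>t. (x1 t + x2 t) + (s1 + s2) * y t) - (s1 + s2) * m y"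
          using p'le[OF x12, of "s1 + s2"] s1 s2 by simp
        moreover have "m (\<lambda>t. (x1 t + x2 t) + (s1 + s2) * y t) \<le> m (\<lambda>t. x1 t + s1 * y t) + m (\<lambda>t. x2 t + s2 * y t)"
          using sl_add[OF msub a1 a2] by (simp add: algebra_simps)
        ultimately show ?thesis by (simp add: algebra_simps)
      qed
      have "p' (\<lambda>t. x1 t + x2 t) - (m (\<lambda>t. x2 t + s2 * y t) - s2 * m y) \<le> p' x1" if "s2 \<ge> 0" for s2
        using key[OF _ that] by (intro p'ge[OF x1]) (simp add: algebra_simps)
      then have "p' (\<lambda>t. x1 t + x2 t) - p' x1 \<le> p' x2"
        by (intro p'ge[OF x2]) (simp add: algebra_simps)
      then show "p' (\<lambda>t. x1 t + x2 t) \<le> p' x1 + p' x2" by simp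
    next
      fix x and c :: real assume x: "x \<in> V" and c: "0 \<le> c"
      have cx: "(\<lambda>t. c * x t) \<in> V" using lc_scale[OF lc x] .
      show "p' (\<lambda>t. c * x t) = c * p' x"
      proof (cases "c = 0")
        case True
        have "p' (\<lambda>t. c * x t) = 0"
        proof (rule antisym)
          show "p' (\<lambda>t. c * x t) \<le> 0" using p'le[OF cx, of 0] True m0 by simp
          show "0 \<le> p' (\<lambda>t. c * x t)" using True
            by (intro p'ge[OF cx]) (simp add: sl_hom[OF msub y])
        qed
        then show ?thesis using True by simp
      next
        case False
        then have cp: "c > 0" using c by simp
        have "p' (\<lambda>t. c * x t) / c \<le> p' x"
        proof (rule p'ge[OF x])
          fix s :: real assume s: "s \<ge> 0"
          have a: "(\<lambda>t. x t + s * y t) \<in> V" using lc_lin[OF lc x y, of 1 "s"] by simp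
          have "p' (\<lambda>t. c * x t) \<le> m (\<lambda>t. c * x t + (c * s) * y t) - (c * s) * m y"
            using p'le[OF cx, of "c * s"] s c by simp
          also have "m (\<lambda>t. c * x t + (c * s) * y t) = c * m (\<lambda>t. x t + s * y t)"
            using sl_hom[OF msub a c] by (simp add: algebra_simps)
          finally show "p' (\<lambda>t. c * x t) / c \<le> m (\<lambda>t. x t + s * y t) - s * m y"
            using cp by (simp add: divide_simps algebra_simps)
        qed
        moreover have "c * p' x \<le> p' (\<lambda>t. c * x t)"
        proof (rule p'ge[OF cx])
          fix s :: real assume s: "s \<ge> 0"
          have a: "(\<lambda>t. x t + (s / c) * y t) \<in> V" using lc_lin[OF lc x y, of 1 "(s / c)"] by simp
          have "c * p' x \<le> c * (m (\<lambda>t. x t + (s / c) * y t) - (s / c) * m y)"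
            using p'le[OF x, of "s / c"] s cp by (intro mult_left_mono) auto
          also have "\<dots> = m (\<lambda>t. c * x t + s * y t) - s * m y"
            using sl_hom[OF msub a c] cp by (simp add: algebra_simps)
          finally show "c * p' x \<le> m (\<lambda>t. c * x t + s * y t) - s * m y" .
        qed
        ultimately show ?thesis using cp by (simp add: divide_simps mult.commute antisym)
      qed
    qed
    have p'A: "p' \<in> A" unfolding A_def using p'sub p'm mq by (auto simp: p'_def intro: order_trans)
    have "R m p'" unfolding R_def using p'm by auto
    then have "p' = m" using mmin p'A by blast
    then have "m (\<lambda>t. - y t) \<le> m (\<lambda>t. - y t + 1 * y t) - 1 * m y"
      using p'le[OF lc_neg[OF lc y], of 1] by simp
    then have "m (\<lambda>t. - y t) \<le> - m y" using m0 by simp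
    moreover have "0 \<le> m y + m (\<lambda>t. - y t)" using sl_negsum[OF msub lc y] .
    ultimately show ?thesis by linarith
  qed
  have madd: "m (\<lambda>t. x t + y t) = m x + m y" if x: "x \<in> V" and y: "y \<in> V" for x y
  proof -
    have "m (\<lambda>t. - x t + - y t) \<le> m (\<lambda>t. - x t) + m (\<lambda>t. - y t)"
      using sl_add[OF msub lc_neg[OF lc x] lc_neg[OF lc y]] .
    moreover have "m (\<lambda>t. - x t + - y t) = - m (\<lambda>t. x t + y t)"
      using mneg[OF lc_add[OF lc x y]] by simp
    ultimately show ?thesis using sl_add[OF msub x y] mneg[OF x] mneg[OF y] by linarith
  qed
  have mhom: "m (\<lambda>t. c * x t) = c * m x" if x: "x \<in> V" for x c
  proof (cases "c \<ge> 0")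
    case True then show ?thesis using sl_hom[OF msub x] by simp
  next
    case False
    have "m (\<lambda>t. - ((- c) * x t)) = - m (\<lambda>t. (- c) * x t)" using mneg[OF lc_scale[OF lc x]] .
    then show ?thesis using sl_hom[OF msub x, of "- c"] False by simp
  qed
  show ?thesis
  proof (intro exI conjI ballI allI)
    fix f g a b assume f: "f \<in> V" and g: "g \<in> V"
    show "m (\<lambda>x. a * f x + b * g x) = a * m f + b * m g"
      using madd[OF lc_scale[OF lc f] lc_scale[OF lc g]] mhom[OF f] mhom[OF g] by simp
  next
    fix f assume "f \<in> V" then show "m f \<le> q f" using mq by simp
  qed
qed


lemma nc_abs: "normal_contraction T \<Longrightarrow> \<bar>T t\<bar> \<le> \<bar>t\<bar>"
  unfolding normal_contraction_def by (metis diff_zero)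

lemma nc_cont: assumes "normal_contraction T" shows "continuous_on UNIV T"
proof -
  have "1-lipschitz_on UNIV T"
    using assms unfolding normal_contraction_def by (intro lipschitz_onI) (auto simp: dist_real_def)
  then show ?thesis by (rule lipschitz_on_continuous_on)
qed

lemma nc_meas: "normal_contraction T \<Longrightarrow> T \<in> borel_measurable borel"
  using nc_cont borel_measurable_continuous_onI by blast

lemma nc_rescale: assumes "normal_contraction T" "l > 0"
  shows "normal_contraction (\<lambda>u. T (l * u) / l)"
proof -
  have "\<bar>T (l * x) / l - T (l * y) / l\<bar> \<le> \<bar>x - y\<bar>" for x y
  proof -
    have "\<bar>T (l * x) - T (l * y)\<bar> \<le> \<bar>l * x - l * y\<bar>" using assms(1) unfolding normal_contraction_def by blast
    also have "\<dots> = l * \<bar>x - y\<bar>" using assms(2) by (simp add: abs_mult right_diff_distrib[symmetric])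
    finally have "\<bar>T (l * x) - T (l * y)\<bar> / l \<le> \<bar>x - y\<bar>" using assms(2) by (simp add: divide_simps mult.commute)
    then show ?thesis using assms(2) by (simp add: diff_divide_distrib[symmetric])
  qed
  then show ?thesis using assms unfolding normal_contraction_def by simp
qed

lemma L2_meas: "g \<in> L2 M \<Longrightarrow> g \<in> borel_measurable M" unfolding L2_def by simp
lemma L2_int: "g \<in> L2 M \<Longrightarrow> integrable M (\<lambda>x. (g x)\<^sup>2)" unfolding L2_def by simp

lemma L2_lin: assumes g: "g \<in> L2 M" and h: "h \<in> L2 M" shows "(\<lambda>x. a * g x + b * h x) \<in> L2 M"
proof -
  have m: "(\<lambda>x. a * g x + b * h x) \<in> borel_measurable M" using L2_meas[OF g] L2_meas[OF h] by simp
  have I: "integrable M (\<lambda>x. 2 * a\<^sup>2 * (g x)\<^sup>2 + 2 * b\<^sup>2 * (h x)\<^sup>2)"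
    using L2_int[OF g] L2_int[OF h] by simp
  have B: "norm ((a * g x + b * h x)\<^sup>2) \<le> norm (2 * a\<^sup>2 * (g x)\<^sup>2 + 2 * b\<^sup>2 * (h x)\<^sup>2)" for x
  proof -
    have "0 \<le> (a * g x - b * h x)\<^sup>2" by simp
    moreover have "(a * g x + b * h x)\<^sup>2 + (a * g x - b * h x)\<^sup>2 = 2 * a\<^sup>2 * (g x)\<^sup>2 + 2 * b\<^sup>2 * (h x)\<^sup>2"
      by (simp add: power2_eq_square algebra_simps)
    ultimately have "(a * g x + b * h x)\<^sup>2 \<le> 2 * a\<^sup>2 * (g x)\<^sup>2 + 2 * b\<^sup>2 * (h x)\<^sup>2" by linarith
    moreover have "0 \<le> 2 * a\<^sup>2 * (g x)\<^sup>2 + 2 * b\<^sup>2 * (h x)\<^sup>2" by simp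
    ultimately show ?thesis by simp
  qed
  have "integrable M (\<lambda>x. (a * g x + b * h x)\<^sup>2)"
    by (rule Bochner_Integration.integrable_bound[OF I]) (use m B in auto)
  then show ?thesis using m unfolding L2_def by simp
qed

lemma L2_comp: assumes T: "normal_contraction T" and g: "g \<in> L2 M" shows "(\<lambda>x. T (g x)) \<in> L2 M"
proof -
  have m: "(\<lambda>x. T (g x)) \<in> borel_measurable M"
    using measurable_compose[OF L2_meas[OF g] nc_meas[OF T]] by (simp add: o_def)
  have "norm ((T (g x))\<^sup>2) \<le> norm ((g x)\<^sup>2)" for x
    using nc_abs[OF T, of "g x"] by (simp add: abs_le_square_iff)
  then have "integrable M (\<lambda>x. (T (g x))\<^sup>2)"
    by (intro Bochner_Integration.integrable_bound[OF L2_int[OF g]]) (use m in auto)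
  then show ?thesis using m unfolding L2_def by simp
qed

lemma L2_zero: "(\<lambda>x. 0) \<in> L2 M" unfolding L2_def by simp

lemma L2_scale: "g \<in> L2 M \<Longrightarrow> (\<lambda>x. c * g x) \<in> L2 M"
  using L2_lin[of g M g c 0] by simp

lemma L2_div: "g \<in> L2 M \<Longrightarrow> (\<lambda>x. g x / c) \<in> L2 M"
  using L2_scale[of g M "1/c"] by simp

lemma L2_diff: "g \<in> L2 M \<Longrightarrow> h \<in> L2 M \<Longrightarrow> (\<lambda>x. g x - h x) \<in> L2 M"
  using L2_lin[of g M h 1 "-1"] by simp

lemma L2_add: "g \<in> L2 M \<Longrightarrow> h \<in> L2 M \<Longrightarrow> (\<lambda>x. g x + h x) \<in> L2 M"
  using L2_lin[of g M h 1 1] by simp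

lemma L2_neg: "g \<in> L2 M \<Longrightarrow> (\<lambda>x. - g x) \<in> L2 M"
  using L2_scale[of g M "-1"] by simp

lemma ennreal_double_le: "(a::ennreal) + a \<le> b + b \<Longrightarrow> a \<le> b"
  by (meson add_strict_mono linorder_not_le)

locale ndf =
  fixes M :: "'a measure" and E :: "('a \<Rightarrow> real) \<Rightarrow> ennreal"
  assumes ndf: "nonlinear_dirichlet_form M E"
begin

lemma E0: "E (\<lambda>x. 0) = 0" using ndf unfolding nonlinear_dirichlet_form_def by blast

lemma E_neg: "g \<in> L2 M \<Longrightarrow> E (\<lambda>x. - g x) = E g"
  using ndf unfolding nonlinear_dirichlet_form_def by blast

lemma E_conv: "g \<in> L2 M \<Longrightarrow> h \<in> L2 M \<Longrightarrow> 0 \<le> t \<Longrightarrow> t \<le> 1 \<Longrightarrow>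
    E (\<lambda>x. t * g x + (1 - t) * h x) \<le> ennreal t * E g + ennreal (1 - t) * E h"
  using ndf unfolding nonlinear_dirichlet_form_def by blast

lemma E_lsc: "(\<And>n. fs n \<in> L2 M) \<Longrightarrow> f \<in> L2 M \<Longrightarrow>
     ((\<lambda>n. integral\<^sup>L M (\<lambda>x. (fs n x - f x)\<^sup>2)) \<longlonglongrightarrow> 0) \<Longrightarrow> E f \<le> liminf (\<lambda>n. E (fs n))"
  using ndf unfolding nonlinear_dirichlet_form_def by blast

lemma E_scale: assumes "g \<in> L2 M" "0 \<le> t" "t \<le> 1" shows "E (\<lambda>x. t * g x) \<le> ennreal t * E g"
  using E_conv[OF assms(1) L2_zero assms(2,3)] E0 by simp

lemma E_nc: assumes T: "normal_contraction T" and g: "g \<in> L2 M" shows "E (\<lambda>x. T (g x)) \<le> E g"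
proof -
  have c: "\<forall>C. normal_contraction C \<longrightarrow> (\<forall>f\<in>L2 M. \<forall>g\<in>L2 M.
        E (\<lambda>x. f x + C (g x)) + E (\<lambda>x. f x - C (g x))
          \<le> E (\<lambda>x. f x + g x) + E (\<lambda>x. f x - g x))"
    using ndf unfolding nonlinear_dirichlet_form_def by blast
  have "E (\<lambda>x. 0 + T (g x)) + E (\<lambda>x. 0 - T (g x)) \<le> E (\<lambda>x. 0 + g x) + E (\<lambda>x. 0 - g x)"
    using c[rule_format, OF T L2_zero g] by simp
  then have "E (\<lambda>x. T (g x)) + E (\<lambda>x. T (g x)) \<le> E g + E g"
    using E_neg[OF g] E_neg[OF L2_comp[OF T g]] by simp
  then show ?thesis by (rule ennreal_double_le)
qed

lemma E_nc_div: assumes T: "normal_contraction T" and g: "g \<in> L2 M" and l: "l > 0"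
  shows "E (\<lambda>x. T (g x) / l) \<le> E (\<lambda>x. g x / l)"
proof -
  have eq: "(\<lambda>x. T (l * (g x / l)) / l) = (\<lambda>x. T (g x) / l)" using l by simp
  show ?thesis using E_nc[OF nc_rescale[OF T l] L2_div[OF g, of l]] unfolding eq .
qed

lemma E_scale_fin: assumes g: "g \<in> L2 M" and l: "l > 0" and fin: "E (\<lambda>x. l * g x) < top" and c: "\<bar>c\<bar> \<le> l"
  shows "E (\<lambda>x. c * g x) < top"
proof -
  have "E (\<lambda>x. \<bar>c\<bar> * g x) < top"
  proof -
    have "E (\<lambda>x. (\<bar>c\<bar> / l) * (l * g x)) \<le> ennreal (\<bar>c\<bar> / l) * E (\<lambda>x. l * g x)"
      using E_scale[OF L2_scale[OF g], of "\<bar>c\<bar> / l" l] l c by simp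
    moreover have "ennreal (\<bar>c\<bar> / l) * E (\<lambda>x. l * g x) < top" using fin
      by (simp add: ennreal_mult_less_top)
    moreover have "(\<lambda>x. (\<bar>c\<bar> / l) * (l * g x)) = (\<lambda>x. \<bar>c\<bar> * g x)" using l by auto
    ultimately show ?thesis by (metis le_less_trans)
  qed
  moreover have "E (\<lambda>x. - (\<bar>c\<bar> * g x)) = E (\<lambda>x. \<bar>c\<bar> * g x)" using E_neg[OF L2_scale[OF g]] .
  ultimately show ?thesis by (cases "c \<ge> 0") auto
qed

lemma MSet_char: "g \<in> MSet M E \<longleftrightarrow> g \<in> L2 M \<and> (\<exists>l>0. E (\<lambda>x. l * g x) < top)"
proof
  assume g: "g \<in> MSet M E"
  then have gL: "g \<in> L2 M" and t: "((\<lambda>l. E (\<lambda>x. l * g x)) \<longlongrightarrow> 0) (at_right 0)" unfolding MSet_def by auto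
  have "eventually (\<lambda>l. E (\<lambda>x. l * g x) < 1) (at_right (0::real))"
    using order_tendstoD(2)[OF t] by simp
  then obtain b where b: "b > 0" "\<And>y. y > 0 \<Longrightarrow> y < b \<Longrightarrow> E (\<lambda>x. y * g x) < 1"
    unfolding eventually_at_right_field by auto
  then have "E (\<lambda>x. (b/2) * g x) < 1" using b(2)[of "b/2"] by simp
  then have "E (\<lambda>x. (b/2) * g x) < top" using ennreal_one_less_top by (rule order.strict_trans)
  then show "g \<in> L2 M \<and> (\<exists>l>0. E (\<lambda>x. l * g x) < top)" using gL b by (intro conjI exI[of _ "b/2"]) auto
next
  assume "g \<in> L2 M \<and> (\<exists>l>0. E (\<lambda>x. l * g x) < top)"
  then obtain l where g: "g \<in> L2 M" and l: "l > 0" and fin: "E (\<lambda>x. l * g x) < top" by auto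
  define k where "k = enn2real (E (\<lambda>x. l * g x))"
  have K: "E (\<lambda>x. l * g x) = ennreal k" using fin unfolding k_def by (simp add: less_top ennreal_enn2real)
  have k0: "k \<ge> 0" unfolding k_def by simp
  have le: "E (\<lambda>x. s * g x) \<le> ennreal (s / l * k)" if "0 < s" "s \<le> l" for s
  proof -
    have "E (\<lambda>x. (s / l) * (l * g x)) \<le> ennreal (s / l) * E (\<lambda>x. l * g x)"
      using E_scale[OF L2_scale[OF g], of "s / l" l] l that by simp
    moreover have "(\<lambda>x. (s / l) * (l * g x)) = (\<lambda>x. s * g x)" using l by auto
    moreover have "ennreal (s / l) * ennreal k = ennreal (s / l * k)"
      using ennreal_mult[of "s/l" k] that l k0 by simp
    ultimately show ?thesis using K by simp
  qed
  have "((\<lambda>s. ennreal (s / l * k)) \<longlongrightarrow> ennreal (0 / l * k)) (at_right 0)"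
    using l by (intro tendsto_ennrealI tendsto_intros) auto
  then have t: "((\<lambda>s. ennreal (s / l * k)) \<longlongrightarrow> 0) (at_right 0)" by simp
  have ev: "eventually (\<lambda>s. E (\<lambda>x. s * g x) \<le> ennreal (s / l * k)) (at_right (0::real))"
    unfolding eventually_at_right_field using l le by (intro exI[of _ l]) auto
  have "((\<lambda>s. E (\<lambda>x. s * g x)) \<longlongrightarrow> 0) (at_right 0)"
    by (rule tendsto_sandwich[OF _ ev tendsto_const t]) simp
  then show "g \<in> MSet M E" using g unfolding MSet_def by simp
qed

end

context ndf
begin

abbreviation "V \<equiv> MSet M E"
abbreviation "N \<equiv> lux_norm E"

lemma V_L2: "g \<in> V \<Longrightarrow> g \<in> L2 M" unfolding MSet_def by simp

lemma V_zero: "(\<lambda>x. 0) \<in> V"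
  unfolding MSet_char using L2_zero E0 by (intro conjI exI[of _ 1]) auto

lemma V_lin: "lin_closed V"
  unfolding lin_closed_def
proof (intro ballI allI)
  fix g h a b assume g: "g \<in> V" and h: "h \<in> V"
  obtain l1 where l1: "l1 > 0" "E (\<lambda>x. l1 * g x) < top" using g unfolding MSet_char by auto
  obtain l2 where l2: "l2 > 0" "E (\<lambda>x. l2 * h x) < top" using h unfolding MSet_char by auto
  define l where "l = min (l1 / (2 * (\<bar>a\<bar> + 1))) (l2 / (2 * (\<bar>b\<bar> + 1)))"
  have lpos: "l > 0" unfolding l_def using l1 l2 by (simp add: add_pos_nonneg)
  have la: "\<bar>2 * l * a\<bar> \<le> l1"
  proof -
    have "l \<le> l1 / (2 * (\<bar>a\<bar> + 1))" unfolding l_def by simp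
    then have "2 * l * (\<bar>a\<bar> + 1) \<le> l1" by (simp add: field_simps add_pos_nonneg)
    then show ?thesis using lpos by (simp add: abs_mult algebra_simps)
  qed
  have lb: "\<bar>2 * l * b\<bar> \<le> l2"
  proof -
    have "l \<le> l2 / (2 * (\<bar>b\<bar> + 1))" unfolding l_def by simp
    then have "2 * l * (\<bar>b\<bar> + 1) \<le> l2" by (simp add: field_simps add_pos_nonneg)
    then show ?thesis using lpos by (simp add: abs_mult algebra_simps)
  qed
  have gL: "g \<in> L2 M" and hL: "h \<in> L2 M" using g h by (auto intro: V_L2)
  have fa: "E (\<lambda>x. (2 * l * a) * g x) < top" by (rule E_scale_fin[OF gL l1 la])
  have fb: "E (\<lambda>x. (2 * l * b) * h x) < top" by (rule E_scale_fin[OF hL l2 lb])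
  have eq: "(\<lambda>x. l * (a * g x + b * h x)) = (\<lambda>x. (1/2) * ((2 * l * a) * g x) + (1 - 1/2) * ((2 * l * b) * h x))"
    by (auto simp: algebra_simps)
  have "E (\<lambda>x. l * (a * g x + b * h x)) \<le> ennreal (1/2) * E (\<lambda>x. (2 * l * a) * g x) + ennreal (1 - 1/2) * E (\<lambda>x. (2 * l * b) * h x)"
    unfolding eq by (rule E_conv[OF L2_scale[OF gL] L2_scale[OF hL]]) auto
  also have "\<dots> < top" using fa fb ennreal_less_top[of "1/2"] ennreal_less_top[of "1 - 1/2"]
    by (simp only: ennreal_add_less_top ennreal_mult_less_top) blast
  finally show "(\<lambda>x. a * g x + b * h x) \<in> V"
    unfolding MSet_char using lpos L2_lin[OF gL hL] by blast
qed

lemma V_comp: assumes T: "normal_contraction T" and g: "g \<in> V" shows "(\<lambda>x. T (g x)) \<in> V"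
proof -
  obtain l where l: "l > 0" "E (\<lambda>x. l * g x) < top" using g unfolding MSet_char by auto
  have gL: "g \<in> L2 M" using g by (rule V_L2)
  have "E (\<lambda>x. T (g x) / (1 / l)) \<le> E (\<lambda>x. g x / (1 / l))" using E_nc_div[OF T gL, of "1/l"] l by simp
  moreover have "(\<lambda>x. T (g x) / (1 / l)) = (\<lambda>x. l * T (g x))" "(\<lambda>x. g x / (1 / l)) = (\<lambda>x. l * g x)"
    by (auto simp: field_simps)
  ultimately have "E (\<lambda>x. l * T (g x)) \<le> E (\<lambda>x. l * g x)" by simp
  then have "E (\<lambda>x. l * T (g x)) < top" using l by (metis le_less_trans)
  then show ?thesis unfolding MSet_char using L2_comp[OF T gL] l by blast
qed

lemma V_add: "g \<in> V \<Longrightarrow> h \<in> V \<Longrightarrow> (\<lambda>x. g x + h x) \<in> V" using lc_add[OF V_lin] .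
lemma V_scale: "g \<in> V \<Longrightarrow> (\<lambda>x. c * g x) \<in> V" using lc_scale[OF V_lin] .
lemma V_neg: "g \<in> V \<Longrightarrow> (\<lambda>x. - g x) \<in> V" using lc_neg[OF V_lin] .
lemma V_diff: "g \<in> V \<Longrightarrow> h \<in> V \<Longrightarrow> (\<lambda>x. g x - h x) \<in> V"
  using lc_lin[OF V_lin, of g h 1 "-1"] by simp

lemma lux_ne: assumes g: "g \<in> V" shows "\<exists>l>0. E (\<lambda>x. g x / l) \<le> 1"
proof -
  have t: "((\<lambda>l. E (\<lambda>x. l * g x)) \<longlongrightarrow> 0) (at_right 0)" using g unfolding MSet_def by auto
  have "eventually (\<lambda>l. E (\<lambda>x. l * g x) < 1) (at_right (0::real))"
    using order_tendstoD(2)[OF t] by simp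
  then obtain b where b: "b > 0" "\<And>y. y > 0 \<Longrightarrow> y < b \<Longrightarrow> E (\<lambda>x. y * g x) < 1"
    unfolding eventually_at_right_field by auto
  then have "E (\<lambda>x. (b/2) * g x) < 1" using b(2)[of "b/2"] by simp
  moreover have "(\<lambda>x. (b/2) * g x) = (\<lambda>x. g x / (2 / b))" using b by (auto simp: field_simps)
  ultimately show ?thesis using b by (intro exI[of _ "2/b"]) auto
qed

lemma lux_nonneg: assumes "g \<in> V" shows "0 \<le> N g"
  unfolding lux_norm_def using lux_ne[OF assms] by (intro cInf_greatest) auto

lemma lux_le: assumes "l > 0" "E (\<lambda>x. g x / l) \<le> 1" shows "N g \<le> l"
  unfolding lux_norm_def using assms by (intro cInf_lower) (auto simp: bdd_below_def intro!: exI[of _ 0])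

lemma lux_le_all: assumes a: "a \<ge> 0" and h: "\<And>l. l > a \<Longrightarrow> E (\<lambda>x. g x / l) \<le> 1" shows "N g \<le> a"
proof (rule field_le_epsilon)
  fix e :: real assume "e > 0"
  then show "N g \<le> a + e" using lux_le[of "a + e" g] h[of "a + e"] a by simp
qed

lemma lux_lt: assumes g: "g \<in> V" and l: "N g < l" shows "E (\<lambda>x. g x / l) \<le> 1"
proof -
  have "{l. l > 0 \<and> E (\<lambda>x. g x / l) \<le> 1} \<noteq> {}" using lux_ne[OF g] by auto
  from cInf_lessD[OF this] l obtain l0 where l0: "l0 > 0" "E (\<lambda>x. g x / l0) \<le> 1" "l0 < l"
    unfolding lux_norm_def by auto
  have lp: "l > 0" using l0 by simp
  have gL: "g \<in> L2 M" using g by (rule V_L2)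
  have eq: "(\<lambda>x. g x / l) = (\<lambda>x. (l0 / l) * (g x / l0))" using l0 by (auto simp: field_simps)
  have "E (\<lambda>x. g x / l) \<le> ennreal (l0 / l) * E (\<lambda>x. g x / l0)"
    unfolding eq by (rule E_scale[OF L2_div[OF gL]]) (use l0 lp in auto)
  also have "\<dots> \<le> ennreal (l0 / l) * 1" using l0 by (intro mult_left_mono) auto
  also have "\<dots> \<le> 1" using l0 lp by simp
  finally show ?thesis .
qed

lemma lux_hom: assumes g: "g \<in> V" and c: "c > 0" shows "N (\<lambda>x. c * g x) = c * N g"
proof -
  have le: "N (\<lambda>x. c * h x) \<le> c * N h" if h: "h \<in> V" and c: "c > 0" for h c
  proof (rule lux_le_all)
    show "0 \<le> c * N h" using lux_nonneg[OF h] c by simp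
  next
    fix l assume "c * N h < l"
    then have "N h < l / c" using c by (simp add: field_simps)
    then have "E (\<lambda>x. h x / (l / c)) \<le> 1" by (rule lux_lt[OF h])
    moreover have "(\<lambda>x. h x / (l / c)) = (\<lambda>x. c * h x / l)" using c by (auto simp: field_simps)
    ultimately show "E (\<lambda>x. c * h x / l) \<le> 1" by simp
  qed
  have "N g = N (\<lambda>x. (1/c) * (c * g x))" using c by simp
  also have "\<dots> \<le> (1/c) * N (\<lambda>x. c * g x)" by (rule le[OF V_scale[OF g, of c]]) (use c in simp)
  finally have "c * N g \<le> N (\<lambda>x. c * g x)" using c by (simp add: field_simps)
  then show ?thesis using le[OF g c] by simp
qed

lemma E_neg_div: "g \<in> L2 M \<Longrightarrow> E (\<lambda>x. - g x / l) = E (\<lambda>x. g x / l)"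
  using E_neg[OF L2_div, of g l] by simp

lemma lux_neg: assumes g: "g \<in> V" shows "N (\<lambda>x. - g x) = N g"
  unfolding lux_norm_def using E_neg_div[OF V_L2[OF g]] by simp

lemma lux_add: assumes g: "g \<in> V" and h: "h \<in> V" shows "N (\<lambda>x. g x + h x) \<le> N g + N h"
proof (rule lux_le_all)
  show "0 \<le> N g + N h" using lux_nonneg[OF g] lux_nonneg[OF h] by simp
next
  fix l assume l: "N g + N h < l"
  define d where "d = (l - (N g + N h)) / 2"
  have d: "d > 0" using l unfolding d_def by simp
  define a where "a = N g + d"
  define b where "b = N h + d"
  have ab: "a + b = l" unfolding a_def b_def d_def by simp
  have a: "a > 0" "N g < a" using lux_nonneg[OF g] d unfolding a_def by auto
  have b: "b > 0" "N h < b" using lux_nonneg[OF h] d unfolding b_def by auto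
  have Ea: "E (\<lambda>x. g x / a) \<le> 1" by (rule lux_lt[OF g a(2)])
  have Eb: "E (\<lambda>x. h x / b) \<le> 1" by (rule lux_lt[OF h b(2)])
  define t where "t = a / l"
  have t: "0 \<le> t" "t \<le> 1" "1 - t = b / l" using a b ab unfolding t_def by (auto simp: field_simps)
  have eq: "(\<lambda>x. (g x + h x) / l) = (\<lambda>x. t * (g x / a) + (1 - t) * (h x / b))"
  proof (rule ext)
    fix x
    have lp: "l > 0" using a b ab by simp
    have "t * (g x / a) = g x / l" using a lp unfolding t_def by (simp add: field_simps)
    moreover have "(1 - t) * (h x / b) = h x / l" unfolding t(3) using b lp by simp
    ultimately show "(g x + h x) / l = t * (g x / a) + (1 - t) * (h x / b)" by (simp add: add_divide_distrib)
  qed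
  have "E (\<lambda>x. (g x + h x) / l) \<le> ennreal t * E (\<lambda>x. g x / a) + ennreal (1 - t) * E (\<lambda>x. h x / b)"
    unfolding eq by (rule E_conv[OF L2_div[OF V_L2[OF g]] L2_div[OF V_L2[OF h]] t(1,2)])
  also have "\<dots> \<le> ennreal t * 1 + ennreal (1 - t) * 1"
    using Ea Eb by (intro add_mono mult_left_mono) auto
  also have "\<dots> = 1" using t(1,2) by (simp add: ennreal_plus[symmetric] del: ennreal_plus)
  finally show "E (\<lambda>x. (g x + h x) / l) \<le> 1" .
qed

lemma lux_nc: assumes T: "normal_contraction T" and g: "g \<in> V" shows "N (\<lambda>x. T (g x)) \<le> N g"
proof (rule lux_le_all[OF lux_nonneg[OF g]])
  fix l assume l: "N g < l"
  have "l > 0" using l lux_nonneg[OF g] by simp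
  then have "E (\<lambda>x. T (g x) / l) \<le> E (\<lambda>x. g x / l)" using E_nc_div[OF T V_L2[OF g]] by simp
  also have "\<dots> \<le> 1" using lux_lt[OF g l] .
  finally show "E (\<lambda>x. T (g x) / l) \<le> 1" .
qed

lemma lux_lsc: assumes hs: "\<And>k. hs k \<in> V" and h: "h \<in> L2 M"
  and conv: "(\<lambda>k. integral\<^sup>L M (\<lambda>x. (hs k x - h x)\<^sup>2)) \<longlonglongrightarrow> 0"
  and c: "c \<ge> 0" and bd: "\<And>k. N (hs k) \<le> c"
  shows "N h \<le> c"
proof (rule lux_le_all[OF c])
  fix l assume l: "c < l"
  then have lp: "l > 0" using c by simp
  have fs: "(\<lambda>x. hs k x / l) \<in> L2 M" for k using L2_div[OF V_L2[OF hs]] .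
  have "(\<lambda>k. integral\<^sup>L M (\<lambda>x. (hs k x / l - h x / l)\<^sup>2)) = (\<lambda>k. integral\<^sup>L M (\<lambda>x. (hs k x - h x)\<^sup>2) / l\<^sup>2)"
    by (simp add: diff_divide_distrib[symmetric] power_divide)
  moreover have "(\<lambda>k. integral\<^sup>L M (\<lambda>x. (hs k x - h x)\<^sup>2) / l\<^sup>2) \<longlonglongrightarrow> 0 / l\<^sup>2"
    by (intro tendsto_divide conv tendsto_const) (use lp in simp)
  ultimately have c2: "(\<lambda>k. integral\<^sup>L M (\<lambda>x. (hs k x / l - h x / l)\<^sup>2)) \<longlonglongrightarrow> 0" by simp
  have "E (\<lambda>x. h x / l) \<le> liminf (\<lambda>k. E (\<lambda>x. hs k x / l))"
    by (rule E_lsc[OF fs L2_div[OF h] c2])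
  also have "\<dots> \<le> 1"
  proof (rule Liminf_le)
    show "eventually (\<lambda>k. E (\<lambda>x. hs k x / l) \<le> 1) sequentially"
      using lux_lt[OF hs] bd l by (intro always_eventually allI) (meson le_less_trans)
  qed simp
  finally show "E (\<lambda>x. h x / l) \<le> 1" .
qed

end

definition bseq_set :: "(nat \<Rightarrow> real) set" where "bseq_set = {a. \<exists>B. \<forall>n. \<bar>a n\<bar> \<le> B}"
definition lsup :: "(nat \<Rightarrow> real) \<Rightarrow> real" where "lsup a = Inf {c. \<exists>k. \<forall>n\<ge>k. a n \<le> c}"

lemma bseq_lin: "lin_closed bseq_set"
  unfolding lin_closed_def bseq_set_def
proof (intro ballI allI)
  fix f g :: "nat \<Rightarrow> real" and a b
  assume "f \<in> {a. \<exists>B. \<forall>n. \<bar>a n\<bar> \<le> B}" "g \<in> {a. \<exists>B. \<forall>n. \<bar>a n\<bar> \<le> B}"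
  then obtain B1 B2 where B: "\<And>n. \<bar>f n\<bar> \<le> B1" "\<And>n. \<bar>g n\<bar> \<le> B2" by auto
  have "\<bar>a * f n + b * g n\<bar> \<le> \<bar>a\<bar> * B1 + \<bar>b\<bar> * B2" for n
  proof -
    have "\<bar>a * f n + b * g n\<bar> \<le> \<bar>a\<bar> * \<bar>f n\<bar> + \<bar>b\<bar> * \<bar>g n\<bar>" by (metis abs_mult abs_triangle_ineq)
    also have "\<dots> \<le> \<bar>a\<bar> * B1 + \<bar>b\<bar> * B2" using B by (intro add_mono mult_left_mono) auto
    finally show ?thesis .
  qed
  then show "(\<lambda>x. a * f x + b * g x) \<in> {a. \<exists>B. \<forall>n. \<bar>a n\<bar> \<le> B}" by blast
qed

lemma bseq_zero: "(\<lambda>x. 0) \<in> bseq_set" unfolding bseq_set_def by auto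

lemma bseqI: "(\<And>n. \<bar>a n\<bar> \<le> B) \<Longrightarrow> a \<in> bseq_set" unfolding bseq_set_def by auto

lemma lsup_ne: "a \<in> bseq_set \<Longrightarrow> {c. \<exists>k. \<forall>n\<ge>k. a n \<le> c} \<noteq> {}"
  unfolding bseq_set_def by (auto simp: abs_le_iff)

lemma lsup_bdd: assumes "a \<in> bseq_set" shows "bdd_below {c. \<exists>k. \<forall>n\<ge>k. a n \<le> c}"
proof -
  obtain B where B: "\<And>n. \<bar>a n\<bar> \<le> B" using assms unfolding bseq_set_def by auto
  have "- B \<le> c" if "\<forall>n\<ge>k. a n \<le> c" for c k using that B[of k] by (auto simp: abs_le_iff)
  then show ?thesis unfolding bdd_below_def by blast
qed

lemma lsup_le: "a \<in> bseq_set \<Longrightarrow> \<forall>n\<ge>k. a n \<le> c \<Longrightarrow> lsup a \<le> c"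
  unfolding lsup_def by (rule cInf_lower) (auto intro: lsup_bdd)

lemma lsup_ge: "a \<in> bseq_set \<Longrightarrow> (\<And>c k. \<forall>n\<ge>k. a n \<le> c \<Longrightarrow> z \<le> c) \<Longrightarrow> z \<le> lsup a"
  unfolding lsup_def by (rule cInf_greatest[OF lsup_ne]) auto

lemma lsup_sublin: "sublin bseq_set lsup"
  unfolding sublin_def
proof (intro conjI ballI allI impI)
  fix a b assume a: "a \<in> bseq_set" and b: "b \<in> bseq_set"
  have ab: "(\<lambda>x. a x + b x) \<in> bseq_set" using lc_add[OF bseq_lin a b] .
  have key: "lsup (\<lambda>x. a x + b x) \<le> c1 + c2" if "\<forall>n\<ge>k1. a n \<le> c1" "\<forall>n\<ge>k2. b n \<le> c2" for c1 c2 k1 k2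
    using that by (intro lsup_le[OF ab, of "max k1 k2"]) (auto intro: add_mono)
  have "lsup (\<lambda>x. a x + b x) - c2 \<le> lsup a" if "\<forall>n\<ge>k2. b n \<le> c2" for c2 k2
    using key[OF _ that] by (intro lsup_ge[OF a]) (simp add: algebra_simps)
  then have "lsup (\<lambda>x. a x + b x) - lsup a \<le> lsup b"
    by (intro lsup_ge[OF b]) (simp add: algebra_simps)
  then show "lsup (\<lambda>x. a x + b x) \<le> lsup a + lsup b" by simp
next
  fix a and c :: real assume a: "a \<in> bseq_set" and c: "0 \<le> c"
  have ca: "(\<lambda>x. c * a x) \<in> bseq_set" using lc_scale[OF bseq_lin a] .
  show "lsup (\<lambda>x. c * a x) = c * lsup a"
  proof (cases "c = 0")
    case True
    have "lsup (\<lambda>x. c * a x) = 0"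
    proof (rule antisym)
      show "lsup (\<lambda>x. c * a x) \<le> 0" using True by (intro lsup_le[OF ca, of 0]) simp
      show "0 \<le> lsup (\<lambda>x. c * a x)" using True by (intro lsup_ge[OF ca]) auto
    qed
    then show ?thesis using True by simp
  next
    case False
    then have cp: "c > 0" using c by simp
    have "lsup (\<lambda>x. c * a x) / c \<le> lsup a"
    proof (rule lsup_ge[OF a])
      fix d k assume "\<forall>n\<ge>k. a n \<le> d"
      then have "lsup (\<lambda>x. c * a x) \<le> c * d" using cp by (intro lsup_le[OF ca, of k]) (auto intro: mult_left_mono)
      then show "lsup (\<lambda>x. c * a x) / c \<le> d" using cp by (simp add: divide_simps mult.commute)
    qed
    moreover have "c * lsup a \<le> lsup (\<lambda>x. c * a x)"
    proof (rule lsup_ge[OF ca])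
      fix d k assume h: "\<forall>n\<ge>k. c * a n \<le> d"
      have "\<forall>n\<ge>k. a n \<le> d / c" using h cp by (auto simp: field_simps mult.commute)
      then have "lsup a \<le> d / c" by (rule lsup_le[OF a])
      then show "c * lsup a \<le> d" using cp by (simp add: field_simps mult.commute)
    qed
    ultimately show ?thesis using cp by (simp add: divide_simps mult.commute antisym)
  qed
qed

lemma banach_limit:
  "\<exists>L. (\<forall>a\<in>bseq_set. \<forall>b\<in>bseq_set. \<forall>s t. L (\<lambda>n. s * a n + t * b n) = s * L a + t * L b)
     \<and> (\<forall>a\<in>bseq_set. \<forall>c k. (\<forall>n\<ge>k. a n \<le> c) \<longrightarrow> L a \<le> c)
     \<and> (\<forall>a\<in>bseq_set. \<forall>c k. (\<forall>n\<ge>k. c \<le> a n) \<longrightarrow> c \<le> L a)"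
proof -
  obtain L where lin: "\<forall>a\<in>bseq_set. \<forall>b\<in>bseq_set. \<forall>s t. L (\<lambda>n. s * a n + t * b n) = s * L a + t * L b"
    and le: "\<forall>a\<in>bseq_set. L a \<le> lsup a"
    using HB[OF bseq_lin bseq_zero lsup_sublin] by blast
  have up: "L a \<le> c" if "a \<in> bseq_set" "\<forall>n\<ge>k. a n \<le> c" for a c k
    using le that lsup_le[OF that] by (meson order_trans)
  have neg: "L (\<lambda>n. - a n) = - L a" if "a \<in> bseq_set" for a
    using lin[rule_format, OF that that, of "-1" 0] by simp
  have low: "c \<le> L a" if a: "a \<in> bseq_set" and h: "\<forall>n\<ge>k. c \<le> a n" for a c k
  proof -
    have "L (\<lambda>n. - a n) \<le> - c" using h by (intro up[OF lc_neg[OF bseq_lin a], of k]) auto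
    then show ?thesis using neg[OF a] by simp
  qed
  show ?thesis using lin up low by blast
qed


context ndf
begin

lemma lux_zero: "N (\<lambda>x. 0) = 0"
proof -
  have "N (\<lambda>x. 0) \<le> 0" by (rule lux_le_all) (auto simp: E0)
  then show ?thesis using lux_nonneg[OF V_zero] by simp
qed

definition "lin_on \<phi> \<longleftrightarrow> (\<forall>f\<in>V. \<forall>g\<in>V. \<forall>a b. \<phi> (\<lambda>x. a * f x + b * g x) = a * \<phi> f + b * \<phi> g)"

lemma lin_onD: "lin_on \<phi> \<Longrightarrow> f \<in> V \<Longrightarrow> g \<in> V \<Longrightarrow> \<phi> (\<lambda>x. a * f x + b * g x) = a * \<phi> f + b * \<phi> g"
  unfolding lin_on_def by blast

lemma lin_on_scale: assumes "lin_on \<phi>" "f \<in> V" shows "\<phi> (\<lambda>x. c * f x) = c * \<phi> f"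
  using lin_onD[OF assms assms(2), of c 0] by simp

lemma lin_on_diff: assumes "lin_on \<phi>" "f \<in> V" "g \<in> V" shows "\<phi> (\<lambda>x. f x - g x) = \<phi> f - \<phi> g"
  using lin_onD[OF assms, of 1 "-1"] by simp

lemma lin_on_neg: assumes "lin_on \<phi>" "f \<in> V" shows "\<phi> (\<lambda>x. - f x) = - \<phi> f"
  using lin_on_scale[OF assms, of "-1"] by simp

lemma dual_lin: "\<phi> \<in> dual_space V N \<Longrightarrow> lin_on \<phi>"
  unfolding dual_space_def lin_on_def by blast

lemma dual_bdd: assumes "\<phi> \<in> dual_space V N"
  shows "bdd_above ((\<lambda>f. \<bar>\<phi> f\<bar>) ` {f \<in> V. N f \<le> 1})"
proof -
  obtain K where K: "\<And>f. f \<in> V \<Longrightarrow> \<bar>\<phi> f\<bar> \<le> K * N f" using assms unfolding dual_space_def by blast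
  have "\<bar>\<phi> f\<bar> \<le> \<bar>K\<bar>" if "f \<in> V" "N f \<le> 1" for f
  proof -
    have "K * N f \<le> \<bar>K\<bar> * N f" using lux_nonneg[OF that(1)] by (intro mult_right_mono) auto
    also have "\<dots> \<le> \<bar>K\<bar> * 1" using that(2) by (intro mult_left_mono) auto
    finally show ?thesis using K[OF that(1)] by simp
  qed
  then show ?thesis unfolding bdd_above_def by blast
qed

lemma dual_norm_nonneg: assumes "\<phi> \<in> dual_space V N" shows "0 \<le> dual_norm V N \<phi>"
proof -
  have "\<bar>\<phi> (\<lambda>x. 0)\<bar> \<le> dual_norm V N \<phi>"
    unfolding dual_norm_def using V_zero lux_zero by (intro cSup_upper dual_bdd[OF assms]) auto
  then show ?thesis by linarith
qed

lemma dual_bound: assumes phi: "\<phi> \<in> dual_space V N" and h: "h \<in> V"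
  shows "\<bar>\<phi> h\<bar> \<le> dual_norm V N \<phi> * N h"
proof -
  obtain K where K: "\<And>f. f \<in> V \<Longrightarrow> \<bar>\<phi> f\<bar> \<le> K * N f" using phi unfolding dual_space_def by blast
  have lin: "lin_on \<phi>" using dual_lin[OF phi] .
  show ?thesis
  proof (cases "N h = 0")
    case True then show ?thesis using K[OF h] by simp
  next
    case False
    then have np: "N h > 0" using lux_nonneg[OF h] by simp
    define h' where "h' = (\<lambda>x. (1 / N h) * h x)"
    have h'V: "h' \<in> V" unfolding h'_def using V_scale[OF h] .
    have "N h' = 1" unfolding h'_def using lux_hom[OF h, of "1 / N h"] np by simp
    then have "\<bar>\<phi> h'\<bar> \<le> dual_norm V N \<phi>"
      unfolding dual_norm_def using h'V by (intro cSup_upper dual_bdd[OF phi]) auto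
    moreover have "\<phi> h' = \<phi> h / N h" unfolding h'_def using lin_on_scale[OF lin h, of "1 / N h"] by simp
    ultimately have "\<bar>\<phi> h\<bar> / N h \<le> dual_norm V N \<phi>" using np by (simp add: abs_divide)
    then show ?thesis using np by (simp add: divide_simps)
  qed
qed

lemma dual_of_le: assumes lin: "lin_on \<phi>" and le: "\<And>h. h \<in> V \<Longrightarrow> \<phi> h \<le> N h"
  shows "\<phi> \<in> dual_space V N" "dual_norm V N \<phi> \<le> 1" "\<And>h. h \<in> V \<Longrightarrow> \<bar>\<phi> h\<bar> \<le> N h"
proof -
  show ab: "\<bar>\<phi> h\<bar> \<le> N h" if h: "h \<in> V" for h
  proof -
    have "- \<phi> h \<le> N h" using le[OF V_neg[OF h]] lin_on_neg[OF lin h] lux_neg[OF h] by simp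
    then show ?thesis using le[OF h] by simp
  qed
  show "\<phi> \<in> dual_space V N" unfolding dual_space_def using lin ab unfolding lin_on_def
    by (intro CollectI conjI exI[of _ 1]) auto
  show "dual_norm V N \<phi> \<le> 1" unfolding dual_norm_def
    using V_zero lux_zero ab by (intro cSup_least) (auto intro: order_trans)
qed

end

context ndf
begin

lemma core:
  assumes refl: "reflexive_form M E" and f: "f \<in> V"
  and Tnc: "\<And>k T. T \<in> Ts k \<Longrightarrow> normal_contraction T"
  and Tconv: "\<And>k T1 T2 t. T1 \<in> Ts k \<Longrightarrow> T2 \<in> Ts k \<Longrightarrow> 0 \<le> t \<Longrightarrow> t \<le> 1 \<Longrightarrow> (\<lambda>u. t * T1 u + (1 - t) * T2 u) \<in> Ts k"
  and s: "\<And>n k. k \<le> n \<Longrightarrow> s n \<in> Ts k"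
  and w: "\<And>k T x. T \<in> Ts k \<Longrightarrow> (T (f x))\<^sup>2 \<le> w k x"
  and wint: "\<And>k. integrable M (w k)"
  and wlim: "(\<lambda>k. integral\<^sup>L M (w k)) \<longlonglongrightarrow> 0"
  and e: "e > 0"
  shows "\<exists>k. \<exists>T\<in>Ts k. N (\<lambda>x. T (f x)) < e"
proof -
  define e' where "e' = e / 2"
  have e': "e' > 0" using e by (simp add: e'_def)
  define xs where "xs n = (\<lambda>x. s n (f x))" for n
  have xsV: "xs n \<in> V" for n unfolding xs_def using V_comp[OF Tnc[OF s[of 0 n]] f] by simp
  have xsN: "N (xs n) \<le> N f" for n unfolding xs_def using lux_nc[OF Tnc[OF s[of 0 n]] f] by simp
  obtain L where Llin: "\<forall>a\<in>bseq_set. \<forall>b\<in>bseq_set. \<forall>s t. L (\<lambda>n. s * a n + t * b n) = s * L a + t * L b"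
     and Lup: "\<forall>a\<in>bseq_set. \<forall>c k. (\<forall>n\<ge>k. a n \<le> c) \<longrightarrow> L a \<le> c"
     and Llow: "\<forall>a\<in>bseq_set. \<forall>c k. (\<forall>n\<ge>k. c \<le> a n) \<longrightarrow> c \<le> L a"
    using banach_limit by blast
  define \<Psi> where "\<Psi> \<phi> = L (\<lambda>n. \<phi> (xs n))" for \<phi> :: "('a \<Rightarrow> real) \<Rightarrow> real"
  have seqb: "\<bar>\<phi> (xs n)\<bar> \<le> dual_norm V N \<phi> * N f" if "\<phi> \<in> dual_space V N" for \<phi> n
  proof -
    have "\<bar>\<phi> (xs n)\<bar> \<le> dual_norm V N \<phi> * N (xs n)" by (rule dual_bound[OF that xsV])
    also have "\<dots> \<le> dual_norm V N \<phi> * N f" using xsN[of n] dual_norm_nonneg[OF that] by (rule mult_left_mono)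
    finally show ?thesis .
  qed
  have seqB: "(\<lambda>n. \<phi> (xs n)) \<in> bseq_set" if "\<phi> \<in> dual_space V N" for \<phi>
    using seqb[OF that] by (rule bseqI)
  have Psib: "\<bar>\<Psi> \<phi>\<bar> \<le> N f * dual_norm V N \<phi>" if \<phi>: "\<phi> \<in> dual_space V N" for \<phi>
  proof -
    have a: "\<forall>n\<ge>0. \<phi> (xs n) \<le> dual_norm V N \<phi> * N f" using seqb[OF \<phi>] by (simp add: abs_le_iff)
    have b: "\<forall>n\<ge>0. - (dual_norm V N \<phi> * N f) \<le> \<phi> (xs n)" using seqb[OF \<phi>] by (simp add: abs_le_iff) (meson minus_le_iff)
    have "\<Psi> \<phi> \<le> dual_norm V N \<phi> * N f" unfolding \<Psi>_def by (rule Lup[rule_format, OF seqB[OF \<phi>]]) (use a in auto)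
    moreover have "- (dual_norm V N \<phi> * N f) \<le> \<Psi> \<phi>" unfolding \<Psi>_def by (rule Llow[rule_format, OF seqB[OF \<phi>]]) (use b in auto)
    ultimately show ?thesis by (simp add: abs_le_iff mult.commute)
  qed
  have PsiB: "\<Psi> \<in> bidual_space V N"
    unfolding bidual_space_def
  proof (intro CollectI conjI ballI allI exI[of _ "N f"])
    fix \<phi> \<psi> a b assume \<phi>: "\<phi> \<in> dual_space V N" and \<psi>: "\<psi> \<in> dual_space V N"
    show "\<Psi> (\<lambda>h. a * \<phi> h + b * \<psi> h) = a * \<Psi> \<phi> + b * \<Psi> \<psi>"
      unfolding \<Psi>_def using Llin[rule_format, OF seqB[OF \<phi>] seqB[OF \<psi>]] by simp
  next
    fix \<phi> assume "\<phi> \<in> dual_space V N" then show "\<bar>\<Psi> \<phi>\<bar> \<le> N f * dual_norm V N \<phi>" by (rule Psib)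
  qed
  obtain g where gV: "g \<in> V" and gb: "bidual_norm V N (\<lambda>\<phi>. \<Psi> \<phi> - canonical_emb g \<phi>) < e'"
    using refl PsiB e' unfolding reflexive_form_def by blast
  have bid_ge: "\<bar>\<Psi> \<phi> - \<phi> g\<bar> \<le> bidual_norm V N (\<lambda>\<phi>. \<Psi> \<phi> - canonical_emb g \<phi>)"
    if \<phi>: "\<phi> \<in> dual_space V N" "dual_norm V N \<phi> \<le> 1" for \<phi>
  proof -
    have bnd: "\<bar>\<Psi> \<phi> - canonical_emb g \<phi>\<bar> \<le> N f + N g"
      if "\<phi> \<in> dual_space V N" "dual_norm V N \<phi> \<le> 1" for \<phi>
    proof -
      have "N f * dual_norm V N \<phi> \<le> N f * 1" using that(2) lux_nonneg[OF f] by (intro mult_left_mono) auto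
      then have 1: "\<bar>\<Psi> \<phi>\<bar> \<le> N f" using Psib[OF that(1)] by simp
      have "dual_norm V N \<phi> * N g \<le> 1 * N g" using that(2) lux_nonneg[OF gV] by (intro mult_right_mono) auto
      then have 2: "\<bar>\<phi> g\<bar> \<le> N g" using dual_bound[OF that(1) gV] by simp
      show ?thesis using 1 2 unfolding canonical_emb_def by linarith
    qed
    have bdd: "bdd_above ((\<lambda>\<phi>. \<bar>\<Psi> \<phi> - canonical_emb g \<phi>\<bar>) ` {\<phi> \<in> dual_space V N. dual_norm V N \<phi> \<le> 1})"
      by (rule bdd_aboveI2) (use bnd in auto)
    have "\<bar>\<Psi> \<phi> - canonical_emb g \<phi>\<bar> \<le> bidual_norm V N (\<lambda>\<phi>. \<Psi> \<phi> - canonical_emb g \<phi>)"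
      unfolding bidual_norm_def by (rule cSup_upper[OF imageI bdd]) (use \<phi> in simp)
    then show ?thesis unfolding canonical_emb_def .
  qed
  have sep: "\<exists>T\<in>Ts k. N (\<lambda>x. T (f x) - g x) < e'" for k
  proof (rule ccontr)
    assume nex: "\<not> (\<exists>T\<in>Ts k. N (\<lambda>x. T (f x) - g x) < e')"
    define D where "D = {(\<lambda>x. T (f x) - g x) | T. T \<in> Ts k}"
    have DV: "d \<in> V" if dD: "d \<in> D" for d
    proof -
      obtain T where "T \<in> Ts k" "d = (\<lambda>x. T (f x) - g x)" using dD unfolding D_def by blast
      then show ?thesis using V_diff[OF V_comp[OF Tnc[OF \<open>T \<in> Ts k\<close>] f] gV] by simp
    qed
    have Dfar: "e' \<le> N d" if "d \<in> D" for d using that nex unfolding D_def by (auto simp: not_less)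
    have Dconv: "(\<lambda>x. a * d1 x + (1 - a) * d2 x) \<in> D" if dd: "d1 \<in> D" "d2 \<in> D" "0 \<le> a" "a \<le> 1" for d1 d2 a
    proof -
      obtain T1 T2 where T: "T1 \<in> Ts k" "T2 \<in> Ts k" "d1 = (\<lambda>x. T1 (f x) - g x)" "d2 = (\<lambda>x. T2 (f x) - g x)"
        using dd(1,2) unfolding D_def by auto
      have "(\<lambda>x. a * d1 x + (1 - a) * d2 x) = (\<lambda>x. (\<lambda>u. a * T1 u + (1 - a) * T2 u) (f x) - g x)"
        unfolding T by (auto simp: algebra_simps)
      then show ?thesis unfolding D_def using Tconv[OF T(1,2) dd(3,4)]
        by (intro CollectI exI[of _ "\<lambda>u. a * T1 u + (1 - a) * T2 u"]) simp
    qed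
    have d0: "(\<lambda>x. s k (f x) - g x) \<in> D" using s[of k k] unfolding D_def by auto
    define Q where "Q h = {N (\<lambda>x. h x + t * d x) - t * e' | t d. 0 \<le> t \<and> d \<in> D}" for h
    define q where "q h = Inf (Q h)" for h
    have Qne: "Q h \<noteq> {}" for h using d0 unfolding Q_def by blast
    have Ntd: "N (\<lambda>x. t * d x) = t * N d" if "0 \<le> t" "d \<in> V" for t d
    proof (cases "t = 0")
      case True then show ?thesis using lux_zero by simp
    next
      case False then show ?thesis using lux_hom[OF that(2)] that(1) by simp
    qed
    have Qlow: "- N h \<le> N (\<lambda>x. h x + t * d x) - t * e'" if h: "h \<in> V" and t: "0 \<le> t" and d: "d \<in> D" for h t d
    proof -
      have htd: "(\<lambda>x. h x + t * d x) \<in> V" using lc_lin[OF V_lin h DV[OF d], of 1 t] by simp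
      have "N (\<lambda>x. (h x + t * d x) + - h x) \<le> N (\<lambda>x. h x + t * d x) + N (\<lambda>x. - h x)"
        by (rule lux_add[OF htd V_neg[OF h]])
      then have "N (\<lambda>x. t * d x) \<le> N (\<lambda>x. h x + t * d x) + N h" using lux_neg[OF h] by simp
      moreover have "t * e' \<le> t * N d" using Dfar[OF d] t by (rule mult_left_mono)
      ultimately show ?thesis using Ntd[OF t DV[OF d]] by linarith
    qed
    have Qbdd: "bdd_below (Q h)" if "h \<in> V" for h
      unfolding Q_def bdd_below_def using Qlow[OF that] by blast
    have qle: "q h \<le> N (\<lambda>x. h x + t * d x) - t * e'" if "h \<in> V" "0 \<le> t" "d \<in> D" for h t d
      unfolding q_def using that by (intro cInf_lower[OF _ Qbdd]) (auto simp: Q_def)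
    have qge: "z \<le> q h" if "\<And>t d. 0 \<le> t \<Longrightarrow> d \<in> D \<Longrightarrow> z \<le> N (\<lambda>x. h x + t * d x) - t * e'" for h z
      unfolding q_def using that by (intro cInf_greatest[OF Qne]) (auto simp: Q_def)
    have qsub: "sublin V q" unfolding sublin_def
    proof (intro conjI ballI allI impI)
      fix h1 h2 assume h1: "h1 \<in> V" and h2: "h2 \<in> V"
      have h12: "(\<lambda>x. h1 x + h2 x) \<in> V" using V_add[OF h1 h2] .
      have key: "q (\<lambda>x. h1 x + h2 x) \<le> (N (\<lambda>x. h1 x + t1 * d1 x) - t1 * e') + (N (\<lambda>x. h2 x + t2 * d2 x) - t2 * e')"
        if t1: "0 \<le> t1" and d1: "d1 \<in> D" and t2: "0 \<le> t2" and d2: "d2 \<in> D" for t1 d1 t2 d2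
      proof (cases "t1 + t2 = 0")
        case True
        then have "t1 = 0" "t2 = 0" using t1 t2 by auto
        then show ?thesis using qle[OF h12 order_refl d1] lux_add[OF h1 h2] by simp
      next
        case False
        define t where "t = t1 + t2"
        have tp: "t > 0" using False t1 t2 unfolding t_def by simp
        define d where "d = (\<lambda>x. (t1 / t) * d1 x + (1 - t1 / t) * d2 x)"
        have "t1 / t \<le> 1" using t2 tp unfolding t_def by (simp add: divide_simps)
        then have dD: "d \<in> D" unfolding d_def using t1 tp by (intro Dconv[OF d1 d2]) auto
        have eq: "(\<lambda>x. (h1 x + h2 x) + t * d x) = (\<lambda>x. (h1 x + t1 * d1 x) + (h2 x + t2 * d2 x))"
        proof (rule ext)
          fix x
          have "t * d x = t1 * d1 x + (t - t1) * d2 x" unfolding d_def using tp by (simp add: algebra_simps)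
          then show "(h1 x + h2 x) + t * d x = (h1 x + t1 * d1 x) + (h2 x + t2 * d2 x)" unfolding t_def by simp
        qed
        have a1: "(\<lambda>x. h1 x + t1 * d1 x) \<in> V" using lc_lin[OF V_lin h1 DV[OF d1], of 1 t1] by simp
        have a2: "(\<lambda>x. h2 x + t2 * d2 x) \<in> V" using lc_lin[OF V_lin h2 DV[OF d2], of 1 t2] by simp
        have "q (\<lambda>x. h1 x + h2 x) \<le> N (\<lambda>x. (h1 x + h2 x) + t * d x) - t * e'" using qle[OF h12 _ dD] tp by simp
        also have "N (\<lambda>x. (h1 x + h2 x) + t * d x) \<le> N (\<lambda>x. h1 x + t1 * d1 x) + N (\<lambda>x. h2 x + t2 * d2 x)"
          unfolding eq by (rule lux_add[OF a1 a2])
        finally show ?thesis unfolding t_def by (simp add: algebra_simps)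
      qed
      have pre: "q (\<lambda>x. h1 x + h2 x) - (N (\<lambda>x. h2 x + t2 * d2 x) - t2 * e') \<le> q h1" if tt: "0 \<le> t2" "d2 \<in> D" for t2 d2
      proof (rule qge)
        fix t :: real and d assume "0 \<le> t" "d \<in> D"
        then show "q (\<lambda>x. h1 x + h2 x) - (N (\<lambda>x. h2 x + t2 * d2 x) - t2 * e') \<le> N (\<lambda>x. h1 x + t * d x) - t * e'"
          using key[OF \<open>0 \<le> t\<close> \<open>d \<in> D\<close> tt] by linarith
      qed
      have "q (\<lambda>x. h1 x + h2 x) - q h1 \<le> q h2"
      proof (rule qge)
        fix t :: real and d assume "0 \<le> t" "d \<in> D"
        then show "q (\<lambda>x. h1 x + h2 x) - q h1 \<le> N (\<lambda>x. h2 x + t * d x) - t * e'"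
          using pre[OF \<open>0 \<le> t\<close> \<open>d \<in> D\<close>] by linarith
      qed
      then show "q (\<lambda>x. h1 x + h2 x) \<le> q h1 + q h2" by simp
    next
      fix h and c :: real assume h: "h \<in> V" and c: "0 \<le> c"
      have ch: "(\<lambda>x. c * h x) \<in> V" using V_scale[OF h] .
      show "q (\<lambda>x. c * h x) = c * q h"
      proof (cases "c = 0")
        case True
        have "q (\<lambda>x. c * h x) = 0"
        proof (rule antisym)
          show "q (\<lambda>x. c * h x) \<le> 0" using qle[OF ch order_refl d0] True lux_zero by simp
          show "0 \<le> q (\<lambda>x. c * h x)"
          proof (rule qge)
            fix t :: real and d assume t: "0 \<le> t" and d: "d \<in> D"
            show "0 \<le> N (\<lambda>x. c * h x + t * d x) - t * e'" using Qlow[OF ch t d] True lux_zero by simp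
          qed
        qed
        then show ?thesis using True by simp
      next
        case False
        then have cp: "c > 0" using c by simp
        have "q (\<lambda>x. c * h x) / c \<le> q h"
        proof (rule qge)
          fix t :: real and d assume t: "0 \<le> t" and d: "d \<in> D"
          have htd: "(\<lambda>x. h x + t * d x) \<in> V" using lc_lin[OF V_lin h DV[OF d], of 1 t] by simp
          have "q (\<lambda>x. c * h x) \<le> N (\<lambda>x. c * h x + (c * t) * d x) - (c * t) * e'" using qle[OF ch _ d] t cp by simp
          also have "N (\<lambda>x. c * h x + (c * t) * d x) = c * N (\<lambda>x. h x + t * d x)"
            using lux_hom[OF htd cp] by (simp add: algebra_simps)
          finally show "q (\<lambda>x. c * h x) / c \<le> N (\<lambda>x. h x + t * d x) - t * e'"
            using cp by (simp add: divide_simps algebra_simps)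
        qed
        moreover have "c * q h \<le> q (\<lambda>x. c * h x)"
        proof (rule qge)
          fix t :: real and d assume t: "0 \<le> t" and d: "d \<in> D"
          have htd: "(\<lambda>x. h x + (t / c) * d x) \<in> V" using lc_lin[OF V_lin h DV[OF d], of 1 "t / c"] by simp
          have "c * q h \<le> c * (N (\<lambda>x. h x + (t / c) * d x) - (t / c) * e')"
            using qle[OF h _ d, of "t / c"] t cp by (intro mult_left_mono) auto
          also have "\<dots> = N (\<lambda>x. c * h x + t * d x) - t * e'"
            using lux_hom[OF htd cp] cp by (simp add: algebra_simps)
          finally show "c * q h \<le> N (\<lambda>x. c * h x + t * d x) - t * e'" .
        qed
        ultimately show ?thesis using cp by (simp add: divide_simps mult.commute antisym)
      qed
    qed
    obtain \<phi> where \<phi>lin: "lin_on \<phi>" and \<phi>q: "\<And>h. h \<in> V \<Longrightarrow> \<phi> h \<le> q h"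
      using HB[OF V_lin V_zero qsub] unfolding lin_on_def by blast
    have \<phi>N: "\<phi> h \<le> N h" if "h \<in> V" for h
      using \<phi>q[OF that] qle[OF that order_refl d0] by simp
    note \<phi>d = dual_of_le[OF \<phi>lin \<phi>N]
    have \<phi>D: "e' \<le> \<phi> d" if d: "d \<in> D" for d
    proof -
      have "\<phi> (\<lambda>x. - d x) \<le> q (\<lambda>x. - d x)" using \<phi>q[OF V_neg[OF DV[OF d]]] .
      also have "q (\<lambda>x. - d x) \<le> N (\<lambda>x. - d x + 1 * d x) - 1 * e'" using qle[OF V_neg[OF DV[OF d]] _ d, of 1] by simp
      also have "N (\<lambda>x. - d x + 1 * d x) = 0" using lux_zero by simp
      finally show ?thesis using lin_on_neg[OF \<phi>lin DV[OF d]] by simp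
    qed
    have hk: "\<forall>n\<ge>k. \<phi> g + e' \<le> \<phi> (xs n)"
    proof (intro allI impI)
      fix n assume n: "k \<le> n"
      have "(\<lambda>x. s n (f x) - g x) \<in> D" unfolding D_def using s[OF n] by blast
      then have "e' \<le> \<phi> (\<lambda>x. s n (f x) - g x)" by (rule \<phi>D)
      moreover have "\<phi> (\<lambda>x. s n (f x) - g x) = \<phi> (xs n) - \<phi> g"
        using lin_on_diff[OF \<phi>lin xsV gV] unfolding xs_def by simp
      ultimately show "\<phi> g + e' \<le> \<phi> (xs n)" by simp
    qed
    have "\<phi> g + e' \<le> \<Psi> \<phi>" unfolding \<Psi>_def by (rule Llow[rule_format, OF seqB[OF \<phi>d(1)]]) (use hk in auto)
    then have "e' \<le> \<bar>\<Psi> \<phi> - \<phi> g\<bar>" by simp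
    also have "\<dots> \<le> bidual_norm V N (\<lambda>\<phi>. \<Psi> \<phi> - canonical_emb g \<phi>)" by (rule bid_ge[OF \<phi>d(1,2)])
    finally show False using gb by simp
  qed
  obtain Tk where Tk: "\<And>k. Tk k \<in> Ts k" "\<And>k. N (\<lambda>x. Tk k (f x) - g x) < e'" using sep by metis
  define z where "z k = (\<lambda>x. Tk k (f x))" for k
  have zV: "z k \<in> V" for k unfolding z_def using V_comp[OF Tnc[OF Tk(1)] f] .
  have Ng: "N g \<le> e'"
  proof (rule lux_lsc[where hs = "\<lambda>k x. g x - z k x"])
    show "(\<lambda>x. g x - z k x) \<in> V" for k using V_diff[OF gV zV] .
    show "g \<in> L2 M" using V_L2[OF gV] .
    show "0 \<le> e'" using e' by simp
    show "N (\<lambda>x. g x - z k x) \<le> e'" for k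
    proof -
      have "N (\<lambda>x. g x - z k x) = N (\<lambda>x. - (z k x - g x))" by simp
      also have "\<dots> = N (\<lambda>x. z k x - g x)" using lux_neg[OF V_diff[OF zV gV]] .
      finally show ?thesis using Tk(2)[of k] unfolding z_def by simp
    qed
    have "(\<lambda>k. LINT x|M. (z k x)\<^sup>2) \<longlonglongrightarrow> 0"
    proof (rule tendsto_sandwich[OF _ _ tendsto_const wlim])
      show "\<forall>\<^sub>F k in sequentially. 0 \<le> LINT x|M. (z k x)\<^sup>2"
        by (intro always_eventually allI integral_nonneg_AE) simp
      show "\<forall>\<^sub>F k in sequentially. LINT x|M. (z k x)\<^sup>2 \<le> integral\<^sup>L M (w k)"
        using integral_mono[OF L2_int[OF V_L2[OF zV]] wint] w Tk(1) unfolding z_def by auto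
    qed
    then show "(\<lambda>k. LINT x|M. (g x - z k x - g x)\<^sup>2) \<longlonglongrightarrow> 0" by simp
  qed
  have "N (\<lambda>x. (z 0 x - g x) + g x) \<le> N (\<lambda>x. z 0 x - g x) + N g"
    by (rule lux_add[OF V_diff[OF zV gV] gV])
  then have "N (z 0) < e" using Tk(2)[of 0] Ng unfolding z_def e'_def by simp
  then show ?thesis using Tk(1)[of 0] unfolding z_def by blast
qed

end

definition soft :: "real \<Rightarrow> real \<Rightarrow> real" where "soft r t = t - clamp r t"

lemma clamp_nc: "0 \<le> r \<Longrightarrow> normal_contraction (clamp r)"
  unfolding normal_contraction_def clamp_def by (auto simp: abs_if min_def max_def)

lemma soft_nc: "0 \<le> r \<Longrightarrow> normal_contraction (soft r)"
  unfolding normal_contraction_def soft_def clamp_def by (auto simp: abs_if min_def max_def)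

lemma clamp_bound: "0 \<le> r \<Longrightarrow> \<bar>clamp r t\<bar> \<le> r"
  unfolding clamp_def by (auto simp: abs_if min_def max_def)

lemma soft_mono: "mono (soft r)"
  unfolding mono_def soft_def clamp_def by (auto simp: min_def max_def)

lemma soft_le: "0 \<le> k \<Longrightarrow> k \<le> n \<Longrightarrow> \<bar>soft n t\<bar> \<le> \<bar>soft k t\<bar>"
  unfolding soft_def clamp_def by (auto simp: abs_if min_def max_def)

lemma soft_abs: "0 \<le> k \<Longrightarrow> \<bar>soft k t\<bar> \<le> \<bar>t\<bar>"
  unfolding soft_def clamp_def by (auto simp: abs_if min_def max_def)

lemma soft_zero: "\<bar>t\<bar> \<le> k \<Longrightarrow> soft k t = 0"
  unfolding soft_def clamp_def by (auto simp: abs_if min_def max_def split: if_splits)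

lemma nc_conv: assumes "normal_contraction T1" "normal_contraction T2" "0 \<le> a" "a \<le> 1"
  shows "normal_contraction (\<lambda>u. a * T1 u + (1 - a) * T2 u)"
proof -
  have "\<bar>(a * T1 x + (1 - a) * T2 x) - (a * T1 y + (1 - a) * T2 y)\<bar> \<le> \<bar>x - y\<bar>" for x y
  proof -
    have "\<bar>(a * T1 x + (1 - a) * T2 x) - (a * T1 y + (1 - a) * T2 y)\<bar>
        = \<bar>a * (T1 x - T1 y) + (1 - a) * (T2 x - T2 y)\<bar>" by (simp add: algebra_simps)
    also have "\<dots> \<le> a * \<bar>T1 x - T1 y\<bar> + (1 - a) * \<bar>T2 x - T2 y\<bar>"
      using assms(3,4) by (metis abs_mult abs_of_nonneg abs_triangle_ineq diff_ge_0_iff_ge)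
    also have "\<dots> \<le> a * \<bar>x - y\<bar> + (1 - a) * \<bar>x - y\<bar>"
      using assms unfolding normal_contraction_def by (intro add_mono mult_left_mono) auto
    finally show ?thesis by (simp add: algebra_simps)
  qed
  then show ?thesis using assms unfolding normal_contraction_def by simp
qed

lemma clampT:
  assumes T: "normal_contraction T" and y: "0 < y" "y \<le> d"
    and p: "\<forall>t\<ge>0. min t d \<le> T t" and n: "\<forall>t\<le>0. T t \<le> max t (- d)"
  shows "clamp y (T t) = clamp y t"
proof -
  have a: "\<bar>T t\<bar> \<le> \<bar>t\<bar>" by (rule nc_abs[OF T])
  show ?thesis
  proof (cases "t \<ge> 0")
    case True
    then have "min t d \<le> T t" using p by blast
    then show ?thesis using a y True unfolding clamp_def by (auto simp: min_def max_def abs_if split: if_splits)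
  next
    case False
    then have "T t \<le> max t (- d)" using n by simp
    then show ?thesis using a y False unfolding clamp_def by (auto simp: min_def max_def abs_if split: if_splits)
  qed
qed

lemma softT:
  assumes mono: "mono T" and c: "0 \<le> c" "c \<le> B" and hp: "\<forall>t\<ge>B. T t = t - c" and hn: "\<forall>t\<le>-B. T t = t + c"
    and R: "B \<le> R"
  shows "soft R t = soft (R - c) (T t)"
proof -
  have TR: "T R = R - c" using hp R by simp
  have TmR: "T (- R) = - R + c" using hn R by simp
  consider "t \<ge> R" | "t \<le> - R" | "- R < t \<and> t < R" by linarith
  then show ?thesis
  proof cases
    case 1 then show ?thesis using hp R c unfolding soft_def clamp_def by (auto simp: min_def max_def)
  next
    case 2 then have "T t = t + c" using hn R by simp
    then show ?thesis using 2 R c unfolding soft_def clamp_def by (auto simp: min_def max_def)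
  next
    case 3
    then have "T (- R) \<le> T t" "T t \<le> T R" using mono unfolding mono_def by auto
    then have "- (R - c) \<le> T t" "T t \<le> R - c" using TR TmR by auto
    then show ?thesis using 3 unfolding soft_def clamp_def by (auto simp: min_def max_def)
  qed
qed


context ndf
begin

lemma part1: assumes refl: "reflexive_form M E" and f: "f \<in> V"
  shows "((\<lambda>e. N (\<lambda>x. clamp e (f x))) \<longlongrightarrow> 0) (at_right 0)"
proof (rule tendstoI)
  fix e :: real assume e: "e > 0"
  define \<epsilon> where "\<epsilon> k = 1 / (real k + 1)" for k :: nat
  have \<epsilon>pos: "\<epsilon> k > 0" for k unfolding \<epsilon>_def by simp
  have \<epsilon>mono: "\<epsilon> n \<le> \<epsilon> k" if "k \<le> n" for n k unfolding \<epsilon>_def using that by (simp add: frac_le)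
  define Ts where "Ts k = {\<phi>. normal_contraction \<phi> \<and> (\<forall>t. \<bar>\<phi> t\<bar> \<le> \<epsilon> k)
      \<and> (\<exists>d>0. (\<forall>t\<ge>0. min t d \<le> \<phi> t) \<and> (\<forall>t\<le>0. \<phi> t \<le> max t (- d)))}" for k
  define w where "w k x = min ((f x)\<^sup>2) ((\<epsilon> k)\<^sup>2)" for k x
  have fL: "f \<in> L2 M" using V_L2[OF f] .
  have "\<exists>k. \<exists>T\<in>Ts k. N (\<lambda>x. T (f x)) < e"
  proof (rule core[OF refl f, where s = "\<lambda>n. clamp (\<epsilon> n)" and w = w])
    show "normal_contraction T" if "T \<in> Ts k" for k T using that unfolding Ts_def by auto
  next
    fix k T1 T2 and t :: real assume T1: "T1 \<in> Ts k" and T2: "T2 \<in> Ts k" and t: "0 \<le> t" "t \<le> 1"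
    obtain d1 where d1: "d1 > 0" "\<forall>u\<ge>0. min u d1 \<le> T1 u" "\<forall>u\<le>0. T1 u \<le> max u (- d1)" using T1 unfolding Ts_def by auto
    obtain d2 where d2: "d2 > 0" "\<forall>u\<ge>0. min u d2 \<le> T2 u" "\<forall>u\<le>0. T2 u \<le> max u (- d2)" using T2 unfolding Ts_def by auto
    have nc: "normal_contraction (\<lambda>u. t * T1 u + (1 - t) * T2 u)"
      using nc_conv[of T1 T2 t] T1 T2 t unfolding Ts_def by auto
    have bd: "\<bar>t * T1 u + (1 - t) * T2 u\<bar> \<le> \<epsilon> k" for u
    proof -
      have "\<bar>t * T1 u + (1 - t) * T2 u\<bar> \<le> t * \<bar>T1 u\<bar> + (1 - t) * \<bar>T2 u\<bar>"
        using t by (metis abs_mult abs_of_nonneg abs_triangle_ineq diff_ge_0_iff_ge)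
      also have "\<dots> \<le> t * \<epsilon> k + (1 - t) * \<epsilon> k"
        using T1 T2 t unfolding Ts_def by (intro add_mono mult_left_mono) auto
      finally show ?thesis by (simp add: algebra_simps)
    qed
    define d where "d = min d1 d2"
    have dp: "d > 0" using d1 d2 unfolding d_def by simp
    have p: "min u d \<le> t * T1 u + (1 - t) * T2 u" if "u \<ge> 0" for u
    proof -
      have "min u d \<le> T1 u" "min u d \<le> T2 u" using d1(2) d2(2) that unfolding d_def by (auto intro: order_trans)
      then have "t * min u d + (1 - t) * min u d \<le> t * T1 u + (1 - t) * T2 u"
        using t by (intro add_mono mult_left_mono) auto
      then show ?thesis by (simp add: algebra_simps)
    qed
    have n: "t * T1 u + (1 - t) * T2 u \<le> max u (- d)" if "u \<le> 0" for u
    proof -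
      have "T1 u \<le> max u (- d)" "T2 u \<le> max u (- d)" using d1(3) d2(3) that unfolding d_def by (auto intro: order_trans)
      then have "t * T1 u + (1 - t) * T2 u \<le> t * max u (- d) + (1 - t) * max u (- d)"
        using t by (intro add_mono mult_left_mono) auto
      then show ?thesis by (simp add: algebra_simps)
    qed
    show "(\<lambda>u. t * T1 u + (1 - t) * T2 u) \<in> Ts k" unfolding Ts_def using nc bd dp p n by blast
  next
    fix n k :: nat assume kn: "k \<le> n"
    have "clamp (\<epsilon> n) t = min t (\<epsilon> n)" if "t \<ge> 0" for t using that \<epsilon>pos[of n] unfolding clamp_def by auto
    moreover have "clamp (\<epsilon> n) t = max t (- \<epsilon> n)" if "t \<le> 0" for t using that \<epsilon>pos[of n] unfolding clamp_def by auto
    moreover have "\<bar>clamp (\<epsilon> n) t\<bar> \<le> \<epsilon> k" for t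
      using clamp_bound[of "\<epsilon> n" t] \<epsilon>pos[of n] \<epsilon>mono[OF kn] by simp
    ultimately show "clamp (\<epsilon> n) \<in> Ts k" unfolding Ts_def using clamp_nc[of "\<epsilon> n"] \<epsilon>pos[of n]
      by (intro CollectI conjI exI[of _ "\<epsilon> n"]) auto
  next
    fix k T x assume T: "T \<in> Ts k"
    have "\<bar>T (f x)\<bar> \<le> \<bar>f x\<bar>" using T unfolding Ts_def by (auto intro: nc_abs)
    moreover have "\<bar>T (f x)\<bar> \<le> \<bar>\<epsilon> k\<bar>" using T \<epsilon>pos[of k] unfolding Ts_def by auto
    ultimately show "(T (f x))\<^sup>2 \<le> w k x" unfolding w_def by (simp add: abs_le_square_iff)
  next
    fix k
    show "integrable M (w k)" unfolding w_def
      by (rule Bochner_Integration.integrable_bound[OF L2_int[OF fL]]) (use L2_meas[OF fL] in auto)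
  next
    have "(\<lambda>k. integral\<^sup>L M (w k)) \<longlonglongrightarrow> integral\<^sup>L M (\<lambda>x. 0)"
    proof (rule integral_dominated_convergence[where w = "\<lambda>x. (f x)\<^sup>2"])
      show "(\<lambda>x. 0) \<in> borel_measurable M" by simp
      show "w k \<in> borel_measurable M" for k unfolding w_def using L2_meas[OF fL] by simp
      show "integrable M (\<lambda>x. (f x)\<^sup>2)" using L2_int[OF fL] .
      show "AE x in M. norm (w k x) \<le> (f x)\<^sup>2" for k unfolding w_def by auto
      have "(\<lambda>k. (\<epsilon> k)\<^sup>2) \<longlonglongrightarrow> 0"
      proof -
        have "(\<lambda>k. 1 / (real k + 1)) \<longlonglongrightarrow> 0" using LIMSEQ_inverse_real_of_nat by (simp add: inverse_eq_divide add.commute)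
        then have "\<epsilon> \<longlonglongrightarrow> 0" unfolding \<epsilon>_def .
        then show ?thesis using tendsto_power[of \<epsilon> 0 sequentially 2] by simp
      qed
      then show "AE x in M. (\<lambda>k. w k x) \<longlonglongrightarrow> 0"
      proof (intro AE_I2)
        fix x assume lim: "(\<lambda>k. (\<epsilon> k)\<^sup>2) \<longlonglongrightarrow> 0"
        show "(\<lambda>k. w k x) \<longlonglongrightarrow> 0"
          by (rule tendsto_sandwich[OF _ _ tendsto_const lim]) (auto simp: w_def)
      qed
    qed
    then show "(\<lambda>k. integral\<^sup>L M (w k)) \<longlonglongrightarrow> 0" by simp
  qed (use e in auto)
  then obtain k T where T: "T \<in> Ts k" and NT: "N (\<lambda>x. T (f x)) < e" by blast
  obtain d where d: "d > 0" "\<forall>t\<ge>0. min t d \<le> T t" "\<forall>t\<le>0. T t \<le> max t (- d)" using T unfolding Ts_def by auto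
  have Tn: "normal_contraction T" using T unfolding Ts_def by auto
  have TfV: "(\<lambda>x. T (f x)) \<in> V" using V_comp[OF Tn f] .
  have "dist (N (\<lambda>x. clamp y (f x))) 0 < e" if y: "0 < y" "y < d" for y
  proof -
    have eq: "(\<lambda>x. clamp y (f x)) = (\<lambda>x. clamp y (T (f x)))" using clampT[OF Tn y(1) _ d(2,3)] y by simp
    have "N (\<lambda>x. clamp y (T (f x))) \<le> N (\<lambda>x. T (f x))" using lux_nc[OF clamp_nc TfV] y by simp
    moreover have "0 \<le> N (\<lambda>x. clamp y (f x))" using lux_nonneg[OF V_comp[OF clamp_nc f]] y by simp
    ultimately show ?thesis using NT eq by simp
  qed
  then show "\<forall>\<^sub>F y in at_right 0. dist (N (\<lambda>x. clamp y (f x))) 0 < e"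
    unfolding eventually_at_right_field using d(1) by blast
qed


lemma part2: assumes refl: "reflexive_form M E" and f: "f \<in> V"
  shows "((\<lambda>R. N (\<lambda>x. clamp R (f x) - f x)) \<longlongrightarrow> 0) at_top"
proof (rule tendstoI)
  fix e :: real assume e: "e > 0"
  define Ts where "Ts k = {\<phi>. normal_contraction \<phi> \<and> mono \<phi> \<and> (\<forall>t. \<bar>\<phi> t\<bar> \<le> \<bar>soft (real k) t\<bar>)
      \<and> (\<exists>B c. 0 \<le> c \<and> c \<le> B \<and> (\<forall>t\<ge>B. \<phi> t = t - c) \<and> (\<forall>t\<le>-B. \<phi> t = t + c))}" for k :: nat
  define w where "w k x = (soft (real k) (f x))\<^sup>2" for k x
  have fL: "f \<in> L2 M" using V_L2[OF f] .
  have "\<exists>k. \<exists>T\<in>Ts k. N (\<lambda>x. T (f x)) < e"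
  proof (rule core[OF refl f, where s = "\<lambda>n. soft (real n)" and w = w])
    show "normal_contraction T" if "T \<in> Ts k" for k T using that unfolding Ts_def by auto
  next
    fix k T1 T2 and t :: real assume T1: "T1 \<in> Ts k" and T2: "T2 \<in> Ts k" and t: "0 \<le> t" "t \<le> 1"
    obtain B1 c1 where b1: "0 \<le> c1" "c1 \<le> B1" "\<forall>u\<ge>B1. T1 u = u - c1" "\<forall>u\<le>-B1. T1 u = u + c1"
      using T1 unfolding Ts_def by auto
    obtain B2 c2 where b2: "0 \<le> c2" "c2 \<le> B2" "\<forall>u\<ge>B2. T2 u = u - c2" "\<forall>u\<le>-B2. T2 u = u + c2"
      using T2 unfolding Ts_def by auto
    have nc: "normal_contraction (\<lambda>u. t * T1 u + (1 - t) * T2 u)"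
      using nc_conv[of T1 T2 t] T1 T2 t unfolding Ts_def by auto
    have mo: "mono (\<lambda>u. t * T1 u + (1 - t) * T2 u)"
      using T1 T2 t unfolding Ts_def mono_def by (auto intro!: add_mono mult_left_mono)
    have bd: "\<bar>t * T1 u + (1 - t) * T2 u\<bar> \<le> \<bar>soft (real k) u\<bar>" for u
    proof -
      have "\<bar>t * T1 u + (1 - t) * T2 u\<bar> \<le> t * \<bar>T1 u\<bar> + (1 - t) * \<bar>T2 u\<bar>"
        using t by (metis abs_mult abs_of_nonneg abs_triangle_ineq diff_ge_0_iff_ge)
      also have "\<dots> \<le> t * \<bar>soft (real k) u\<bar> + (1 - t) * \<bar>soft (real k) u\<bar>"
        using T1 T2 t unfolding Ts_def by (intro add_mono mult_left_mono) auto
      finally show ?thesis by (simp add: algebra_simps)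
    qed
    define B where "B = max B1 B2"
    define c where "c = t * c1 + (1 - t) * c2"
    have c0: "0 \<le> c" unfolding c_def using b1 b2 t by simp
    have cB: "c \<le> B"
    proof -
      have "c \<le> t * B + (1 - t) * B" unfolding c_def B_def using b1 b2 t
        by (intro add_mono mult_left_mono) auto
      then show ?thesis by (simp add: algebra_simps)
    qed
    have hp: "\<forall>u\<ge>B. t * T1 u + (1 - t) * T2 u = u - c"
    proof (intro allI impI)
      fix u assume "B \<le> u"
      then have h12: "T1 u = u - c1" "T2 u = u - c2" using b1(3) b2(3) unfolding B_def by auto
      show "t * T1 u + (1 - t) * T2 u = u - c" unfolding c_def h12 by (simp add: algebra_simps)
    qed
    have hn: "\<forall>u\<le>-B. t * T1 u + (1 - t) * T2 u = u + c"
    proof (intro allI impI)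
      fix u assume "u \<le> - B"
      then have h12: "T1 u = u + c1" "T2 u = u + c2" using b1(4) b2(4) unfolding B_def by auto
      show "t * T1 u + (1 - t) * T2 u = u + c" unfolding c_def h12 by (simp add: algebra_simps)
    qed
    show "(\<lambda>u. t * T1 u + (1 - t) * T2 u) \<in> Ts k" unfolding Ts_def
      using nc mo bd c0 cB hp hn by blast
  next
    fix n k :: nat assume kn: "k \<le> n"
    have "soft (real n) t = t - real n" if "t \<ge> real n" for t using that unfolding soft_def clamp_def by auto
    moreover have "soft (real n) t = t + real n" if "t \<le> - real n" for t using that unfolding soft_def clamp_def by auto
    moreover have "\<bar>soft (real n) t\<bar> \<le> \<bar>soft (real k) t\<bar>" for t using soft_le[of "real k" "real n" t] kn by simp
    ultimately show "soft (real n) \<in> Ts k" unfolding Ts_def using soft_nc[of "real n"] soft_mono[of "real n"]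
      by (intro CollectI conjI exI[of _ "real n"]) auto
  next
    fix k T x assume T: "T \<in> Ts k"
    have "\<bar>T (f x)\<bar> \<le> \<bar>soft (real k) (f x)\<bar>" using T unfolding Ts_def by auto
    then show "(T (f x))\<^sup>2 \<le> w k x" unfolding w_def by (simp add: abs_le_square_iff)
  next
    fix k
    show "integrable M (w k)" unfolding w_def using L2_int[OF L2_comp[OF soft_nc fL]] by simp
  next
    have "(\<lambda>k. integral\<^sup>L M (w k)) \<longlonglongrightarrow> integral\<^sup>L M (\<lambda>x. 0)"
    proof (rule integral_dominated_convergence[where w = "\<lambda>x. (f x)\<^sup>2"])
      show "(\<lambda>x. 0) \<in> borel_measurable M" by simp
      show "w k \<in> borel_measurable M" for k unfolding w_def using L2_meas[OF L2_comp[OF soft_nc fL]] by simp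
      show "integrable M (\<lambda>x. (f x)\<^sup>2)" using L2_int[OF fL] .
      show "AE x in M. norm (w k x) \<le> (f x)\<^sup>2" for k
        unfolding w_def using soft_abs[of "real k"] by (auto simp: abs_le_square_iff)
      show "AE x in M. (\<lambda>k. w k x) \<longlonglongrightarrow> 0"
      proof (intro AE_I2 tendsto_eventually)
        fix x
        show "\<forall>\<^sub>F k in sequentially. w k x = 0"
          unfolding eventually_sequentially w_def
        proof (intro exI[of _ "nat \<lceil>\<bar>f x\<bar>\<rceil>"] allI impI)
          fix k assume "nat \<lceil>\<bar>f x\<bar>\<rceil> \<le> k"
          then have "\<bar>f x\<bar> \<le> real k" by linarith
          then show "(soft (real k) (f x))\<^sup>2 = 0" using soft_zero by simp
        qed
      qed
    qed
    then show "(\<lambda>k. integral\<^sup>L M (w k)) \<longlonglongrightarrow> 0" by simp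
  qed (use e in auto)
  then obtain k T where T: "T \<in> Ts k" and NT: "N (\<lambda>x. T (f x)) < e" by blast
  obtain B c where b: "0 \<le> c" "c \<le> B" "\<forall>t\<ge>B. T t = t - c" "\<forall>t\<le>-B. T t = t + c"
    using T unfolding Ts_def by auto
  have Tn: "normal_contraction T" and Tm: "mono T" using T unfolding Ts_def by auto
  have TfV: "(\<lambda>x. T (f x)) \<in> V" using V_comp[OF Tn f] .
  have "dist (N (\<lambda>x. clamp R (f x) - f x)) 0 < e" if R: "R \<ge> B" for R
  proof -
    have Rc: "0 \<le> R - c" using R b by simp
    have eq: "(\<lambda>x. soft R (f x)) = (\<lambda>x. soft (R - c) (T (f x)))" using softT[OF Tm b R] by simp
    have "N (\<lambda>x. soft (R - c) (T (f x))) \<le> N (\<lambda>x. T (f x))" using lux_nc[OF soft_nc[OF Rc] TfV] .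
    moreover have sV: "(\<lambda>x. soft R (f x)) \<in> V" using V_comp[OF soft_nc f] R b by simp
    moreover have "N (\<lambda>x. clamp R (f x) - f x) = N (\<lambda>x. soft R (f x))"
    proof -
      have "(\<lambda>x. clamp R (f x) - f x) = (\<lambda>x. - soft R (f x))" unfolding soft_def by auto
      then show ?thesis using lux_neg[OF sV] by simp
    qed
    moreover have "0 \<le> N (\<lambda>x. soft R (f x))" using lux_nonneg[OF sV] .
    ultimately show ?thesis using NT eq by simp
  qed
  then show "\<forall>\<^sub>F R in at_top. dist (N (\<lambda>x. clamp R (f x) - f x)) 0 < e"
    unfolding eventually_at_top_linorder by blast
qed


lemma H_nc: "0 \<le> d \<Longrightarrow> d \<le> R \<Longrightarrow> normal_contraction (\<lambda>t. clamp R t - clamp d t)"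
  unfolding normal_contraction_def clamp_def by (auto simp: abs_if min_def max_def split: if_splits)

lemma H_small: assumes "0 < d" "d \<le> R" shows "\<bar>clamp R t - clamp d t\<bar> \<le> t\<^sup>2 / d"
proof -
  have a: "\<bar>clamp R t - clamp d t\<bar> \<le> \<bar>t\<bar>" using nc_abs[OF H_nc[of d R]] assms by simp
  show ?thesis
  proof (cases "\<bar>t\<bar> \<le> d")
    case True
    then have "clamp R t - clamp d t = 0" using assms unfolding clamp_def by (auto simp: abs_if min_def max_def split: if_splits)
    then show ?thesis using assms by simp
  next
    case False
    then have "\<bar>t\<bar> * d \<le> \<bar>t\<bar> * \<bar>t\<bar>" by (intro mult_left_mono) auto
    then have "\<bar>t\<bar> \<le> t\<^sup>2 / d" using assms by (simp add: field_simps power2_eq_square)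
    then show ?thesis using a by linarith
  qed
qed

lemma part3: assumes refl: "reflexive_form M E" and g: "g \<in> V" and e: "e > 0"
  shows "\<exists>h\<in>V. integrable M h \<and> (\<exists>K. AE x in M. \<bar>h x\<bar> \<le> K) \<and> N (\<lambda>x. h x - g x) < e"
proof -
  have e2: "e / 2 > 0" using e by simp
  have "eventually (\<lambda>y. N (\<lambda>x. clamp y (g x)) < e / 2) (at_right 0)"
    using order_tendstoD(2)[OF part1[OF refl g] e2] .
  then obtain b where b: "b > 0" "\<And>y. y > 0 \<Longrightarrow> y < b \<Longrightarrow> N (\<lambda>x. clamp y (g x)) < e / 2"
    unfolding eventually_at_right_field by auto
  define d where "d = b / 2"
  have d: "d > 0" "N (\<lambda>x. clamp d (g x)) < e / 2" using b unfolding d_def by auto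
  have "eventually (\<lambda>R. N (\<lambda>x. clamp R (g x) - g x) < e / 2) at_top"
    using order_tendstoD(2)[OF part2[OF refl g] e2] .
  then obtain R0 where R0: "\<And>R. R \<ge> R0 \<Longrightarrow> N (\<lambda>x. clamp R (g x) - g x) < e / 2"
    unfolding eventually_at_top_linorder by auto
  define R where "R = max R0 d"
  have R: "d \<le> R" "N (\<lambda>x. clamp R (g x) - g x) < e / 2" using R0 unfolding R_def by auto
  define h where "h = (\<lambda>x. clamp R (g x) - clamp d (g x))"
  have gL: "g \<in> L2 M" using V_L2[OF g] .
  have hV: "h \<in> V" unfolding h_def using V_comp[OF H_nc[of d R] g] d R by simp
  have hint: "integrable M h"
  proof (rule Bochner_Integration.integrable_bound)
    show "integrable M (\<lambda>x. (g x)\<^sup>2 / d)" using L2_int[OF gL] by simp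
    show "h \<in> borel_measurable M" using L2_meas[OF V_L2[OF hV]] .
    show "AE x in M. norm (h x) \<le> norm ((g x)\<^sup>2 / d)"
      unfolding h_def using H_small[OF d(1) R(1)] d(1) by auto
  qed
  have hb: "AE x in M. \<bar>h x\<bar> \<le> R + d"
  proof (intro AE_I2)
    fix x
    have "\<bar>clamp R (g x)\<bar> \<le> R" "\<bar>clamp d (g x)\<bar> \<le> d" using clamp_bound d R by auto
    then show "\<bar>h x\<bar> \<le> R + d" unfolding h_def by linarith
  qed
  have aV: "(\<lambda>x. clamp R (g x) - g x) \<in> V" using V_diff[OF V_comp[OF clamp_nc g] g] d R by simp
  have cV: "(\<lambda>x. clamp d (g x)) \<in> V" using V_comp[OF clamp_nc g] d by simp
  have "N (\<lambda>x. (clamp R (g x) - g x) + - clamp d (g x)) \<le> N (\<lambda>x. clamp R (g x) - g x) + N (\<lambda>x. - clamp d (g x))"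
    by (rule lux_add[OF aV V_neg[OF cV]])
  moreover have "(\<lambda>x. h x - g x) = (\<lambda>x. (clamp R (g x) - g x) + - clamp d (g x))" unfolding h_def by auto
  ultimately have "N (\<lambda>x. h x - g x) < e" using lux_neg[OF cV] R(2) d(2) by simp
  then show ?thesis using hV hint hb by blast
qed

end
theorem lemma3p4:
  fixes M :: "'a measure" and E :: "('a \<Rightarrow> real) \<Rightarrow> ennreal" and f :: "'a \<Rightarrow> real"
  assumes "sigma_finite_measure M"
    and "nonlinear_dirichlet_form M E"
    and "reflexive_form M E"
    and "f \<in> MSet M E"
  shows "((\<lambda>e. lux_norm E (\<lambda>x. clamp e (f x))) \<longlongrightarrow> 0) (at_right 0)
     \<and> ((\<lambda>R. lux_norm E (\<lambda>x. clamp R (f x) - f x)) \<longlongrightarrow> 0) at_top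
     \<and> (\<forall>g\<in>MSet M E. \<forall>e>0. \<exists>h\<in>MSet M E. integrable M h \<and> (\<exists>K. AE x in M. \<bar>h x\<bar> \<le> K)
            \<and> lux_norm E (\<lambda>x. h x - g x) < e)"
proof -
  interpret ndf M E by unfold_locales (rule assms(2))
  show ?thesis using part1[OF assms(3,4)] part2[OF assms(3,4)] part3[OF assms(3)] by blast
qed


end
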